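(* Let $\varphi$ be an automorphism of $E$ with $\varphi^2=\mathrm{id}_E$ and let $\beta=\{e_1,e_2,\ldots\}$ be a basis of $L$. Let $I=\{n\mid\varphi(e_n)=\pm e_n\}$, $I^+=\{i\in I\mid\varphi(e_i)=e_i\}$, $I^-=\{i\in I\mid\varphi(e_i)=-e_i\}$, $J=\mathbb{N}\setminus I$, and for $j\in\mathbb{N}$ put $a_j=(e_j+\varphi(e_j))/2$. Suppose $\varphi$ is of type S2, i.e. $I^+$ is infinite, $I^-$ and $J$ are finite and $J\neq\emptyset$. If each $a_j$, $j\in J$, is a linear combination of monomials of length $\ge 3$, then $T_2(E_\varphi)=T_2(E_{\varphi_\ell})$, where $\varphi_\ell$ is the linearization of $\varphi$.
   Context: $F$ is a field of characteristic zero, $L$ an infinite-dimensional $F$-vector space with basis $e_1,e_2,\ldots$, $E$ its Grassmann algebra (basis $1$ and monomials $e_{i_1}\cdots e_{i_k}$, $i_1<\cdots<i_k$, $e_ie_j=-e_je_i$); the length of such a monomial is $k$. For an automorphism $\psi$ of $E$ with $\psi^2=\mathrm{id}$, $E_\psi=E_{0,\psi}\oplus E_{1,\psi}$ denotes the $\mathbb{Z}_2$-grading given by the eigenspaces of $\psi$ for eigenvalues $1$ and $-1$. Linearization: write $\varphi(e_i)=u_i+v_i$ with $u_i\in L$ and $v_i$ a linear combination of monomials of length $\ge2$; $\varphi_\ell$ is the endomorphism of $E$ with $\varphi_\ell(e_i)=u_i$ (it is an automorphism of order 2). $T_2(A)$ denotes the ideal of $\mathbb{Z}_2$-graded polynomial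 identities of the superalgebra $A=A_0\oplus A_1$, i.e. the elements of the free algebra $F\langle Y\cup Z\rangle$ ($Y$ variables of degree $0$, $Z$ of degree $1$) vanishing under all degree-respecting substitutions. *)

theory Defs
  imports Main
begin

text \<open>Concrete model of the Grassmann algebra E of the vector space L with basis
  e_0, e_1, e_2, ... (indexed by nat).  An element of E is a finitely supported
  function from finite sets of indices (a set S = {i1 < ... < ik} standing for the
  monomial e_i1 ... e_ik of length k = card S) to the coefficient field.\<close>

type_synonym 'a grass = "nat set \<Rightarrow> 'a"

definition grass :: "'a::zero grass set" where
  "grass = {x. finite {S. x S \<noteq> 0} \<and> (\<forall>S. x S \<noteq> 0 \<longrightarrow> finite S)}"

definition gzero :: "'a::zero grass" where
  "gzero = (\<lambda>S. 0)"

definition gone :: "'a::{zero,one} grass" where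
  "gone = (\<lambda>S. if S = {} then 1 else 0)"

definition gen :: "nat \<Rightarrow> 'a::{zero,one} grass" where
  "gen i = (\<lambda>S. if S = {i} then 1 else 0)"

definition gadd :: "'a::plus grass \<Rightarrow> 'a grass \<Rightarrow> 'a grass" where
  "gadd x y = (\<lambda>S. x S + y S)"

definition gneg :: "'a::uminus grass \<Rightarrow> 'a grass" where
  "gneg x = (\<lambda>S. - x S)"

definition gsmult :: "'a::times \<Rightarrow> 'a grass \<Rightarrow> 'a grass" where
  "gsmult c x = (\<lambda>S. c * x S)"

text \<open>number of inversions: e_S e_T = (-1)^inv S T e_(S \<union> T) for disjoint S, T\<close>
definition inv_count :: "nat set \<Rightarrow> nat set \<Rightarrow> nat" where
  "inv_count S T = card {(s, t). s \<in> S \<and> t \<in> T \<and> t < s}"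

definition gmul :: "'a::comm_ring_1 grass \<Rightarrow> 'a grass \<Rightarrow> 'a grass" where
  "gmul x y = (\<lambda>U. \<Sum>(S, T) \<in> {(S, T). x S \<noteq> 0 \<and> y T \<noteq> 0 \<and> S \<inter> T = {} \<and> S \<union> T = U}.
                  (-1) ^ inv_count S T * x S * y T)"

definition gprod :: "'a::comm_ring_1 grass list \<Rightarrow> 'a grass" where
  "gprod xs = foldr gmul xs gone"

definition grass_aut :: "('a::field grass \<Rightarrow> 'a grass) \<Rightarrow> bool" where
  "grass_aut \<phi> \<longleftrightarrow> bij_betw \<phi> grass grass
     \<and> (\<forall>x\<in>grass. \<forall>y\<in>grass. \<phi> (gadd x y) = gadd (\<phi> x) (\<phi> y))
     \<and> (\<forall>c. \<forall>x\<in>grass. \<phi> (gsmult c x) = gsmult c (\<phi> x))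
     \<and> (\<forall>x\<in>grass. \<forall>y\<in>grass. \<phi> (gmul x y) = gmul (\<phi> x) (\<phi> y))
     \<and> \<phi> gone = gone"

definition Iset :: "('a::field grass \<Rightarrow> 'a grass) \<Rightarrow> nat set" where
  "Iset \<phi> = {n. \<phi> (gen n) = gen n \<or> \<phi> (gen n) = gneg (gen n)}"

definition Iplus :: "('a::field grass \<Rightarrow> 'a grass) \<Rightarrow> nat set" where
  "Iplus \<phi> = {i \<in> Iset \<phi>. \<phi> (gen i) = gen i}"

definition Iminus :: "('a::field grass \<Rightarrow> 'a grass) \<Rightarrow> nat set" where
  "Iminus \<phi> = {i \<in> Iset \<phi>. \<phi> (gen i) = gneg (gen i)}"

definition Jset :: "('a::field grass \<Rightarrow> 'a grass) \<Rightarrow> nat set" where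
  "Jset \<phi> = UNIV - Iset \<phi>"

definition aj :: "('a::field grass \<Rightarrow> 'a grass) \<Rightarrow> nat \<Rightarrow> 'a grass" where
  "aj \<phi> j = gsmult (1/2) (gadd (gen j) (\<phi> (gen j)))"

definition type_S2 :: "('a::field grass \<Rightarrow> 'a grass) \<Rightarrow> bool" where
  "type_S2 \<phi> \<longleftrightarrow> infinite (Iplus \<phi>) \<and> finite (Iminus \<phi>) \<and> finite (Jset \<phi>) \<and> Jset \<phi> \<noteq> {}"

definition length_ge :: "nat \<Rightarrow> 'a::zero grass \<Rightarrow> bool" where
  "length_ge k x \<longleftrightarrow> (\<forall>S. x S \<noteq> 0 \<longrightarrow> k \<le> card S)"

definition gext :: "(nat \<Rightarrow> 'a::comm_ring_1 grass) \<Rightarrow> 'a grass \<Rightarrow> 'a grass" where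
  "gext u x = (\<lambda>U. \<Sum>S | x S \<noteq> 0. x S * gprod (map u (sorted_list_of_set S)) U)"

text \<open>linearization: phi(e_i) = u_i + v_i, u_i \<in> L (length-1 part), v_i of length \<ge> 2\<close>
definition lin_part :: "('a::field grass \<Rightarrow> 'a grass) \<Rightarrow> nat \<Rightarrow> 'a grass" where
  "lin_part \<phi> i = (\<lambda>S. if card S = 1 then \<phi> (gen i) S else 0)"

definition linearization :: "('a::field grass \<Rightarrow> 'a grass) \<Rightarrow> ('a grass \<Rightarrow> 'a grass)" where
  "linearization \<phi> = gext (lin_part \<phi>)"

definition Ezero :: "('a::field grass \<Rightarrow> 'a grass) \<Rightarrow> 'a grass set" where
  "Ezero \<psi> = {x \<in> grass. \<psi> x = x}"

definition Eone :: "('a::field grass \<Rightarrow> 'a grass) \<Rightarrow> 'a grass set" where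
  "Eone \<psi> = {x \<in> grass. \<psi> x = gneg x}"

text \<open>Free associative algebra F<Y \<union> Z>: variables Inl i = y_i (degree 0),
  Inr i = z_i (degree 1); words are lists of variables; polynomials are finitely
  supported coefficient functions on words.\<close>
type_synonym 'a fpoly = "(nat + nat) list \<Rightarrow> 'a"

definition fpolys :: "'a::zero fpoly set" where
  "fpolys = {f. finite {w. f w \<noteq> 0}}"

definition peval :: "((nat + nat) \<Rightarrow> 'a::comm_ring_1 grass) \<Rightarrow> 'a fpoly \<Rightarrow> 'a grass" where
  "peval s f = (\<lambda>U. \<Sum>w | f w \<noteq> 0. f w * gprod (map s w) U)"

definition T2 :: "'a::comm_ring_1 grass set \<Rightarrow> 'a grass set \<Rightarrow> 'a fpoly set" where
  "T2 A0 A1 = {f \<in> fpolys. \<forall>s. (\<forall>i. s (Inl i) \<in> A0) \<and> (\<forall>i. s (Inr i) \<in> A1)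
                                  \<longrightarrow> peval s f = gzero}"

end

theory Submission
  imports Defs
begin


definition supp :: "'a::zero grass \<Rightarrow> nat set set" where
  "supp x = {S. x S \<noteq> 0}"

definition gmono :: "nat set \<Rightarrow> 'a::comm_ring_1 grass" where
  "gmono S = (\<lambda>U. if U = S then 1 else 0)"

definition mm :: "nat set \<Rightarrow> nat set \<Rightarrow> nat set \<Rightarrow> 'a::comm_ring_1" where
  "mm S T U = (if S \<inter> T = {} \<and> S \<union> T = U then (-1) ^ inv_count S T else 0)"

definition gsum :: "'b set \<Rightarrow> ('b \<Rightarrow> 'a::comm_ring_1 grass) \<Rightarrow> 'a grass" where
  "gsum A F = (\<lambda>U. \<Sum>i\<in>A. F i U)"

lemma grassD: "x \<in> grass \<Longrightarrow> finite (supp x)" "x \<in> grass \<Longrightarrow> x S \<noteq> 0 \<Longrightarrow> finite S"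
  by (auto simp: grass_def supp_def)

lemma grassI: "finite (supp x) \<Longrightarrow> (\<And>S. x S \<noteq> 0 \<Longrightarrow> finite S) \<Longrightarrow> x \<in> grass"
  by (auto simp: grass_def supp_def)

lemma supp_fin_sets: "x \<in> grass \<Longrightarrow> S \<in> supp x \<Longrightarrow> finite S"
  by (auto simp: grass_def supp_def)

lemma gmul_expand:
  fixes x y :: "'a::comm_ring_1 grass"
  assumes "finite A" "finite B" "supp x \<subseteq> A" "supp y \<subseteq> B"
  shows "gmul x y U = (\<Sum>S\<in>A. \<Sum>T\<in>B. x S * y T * mm S T U)"
proof -
  let ?P = "{(S, T). x S \<noteq> 0 \<and> y T \<noteq> 0 \<and> S \<inter> T = {} \<and> S \<union> T = U}"
  have sub: "?P \<subseteq> A \<times> B" using assms by (auto simp: supp_def)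
  have "gmul x y U = (\<Sum>(S,T)\<in>?P. x S * y T * mm S T U)"
    unfolding gmul_def by (rule sum.cong) (auto simp: mm_def)
  also have "\<dots> = (\<Sum>(S,T)\<in>A \<times> B. x S * y T * mm S T U)"
  proof (rule sum.mono_neutral_left)
    show "\<forall>i\<in>A \<times> B - ?P. (case i of (S, T) \<Rightarrow> x S * y T * mm S T U) = 0"
    proof
      fix i assume "i \<in> A \<times> B - ?P"
      obtain S T where i: "i = (S,T)" by (cases i)
      have n: "\<not> (x S \<noteq> 0 \<and> y T \<noteq> 0 \<and> S \<inter> T = {} \<and> S \<union> T = U)"
        using \<open>i \<in> A \<times> B - ?P\<close> unfolding i by blast
      show "(case i of (S, T) \<Rightarrow> x S * y T * mm S T U) = 0"
        using n unfolding i mm_def by (cases "S \<inter> T = {} \<and> S \<union> T = U") auto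
    qed
  qed (use assms sub in auto)
  also have "\<dots> = (\<Sum>S\<in>A. \<Sum>T\<in>B. x S * y T * mm S T U)"
    by (simp add: sum.cartesian_product)
  finally show ?thesis .
qed

lemma inv_pairs_finite: "finite S \<Longrightarrow> finite T \<Longrightarrow> finite {(s, t). s \<in> S \<and> t \<in> T \<and> t < s}"
  by (rule finite_subset[of _ "S \<times> T"]) auto

lemma inv_union_left:
  assumes "finite S" "finite T" "finite W" "S \<inter> T = {}"
  shows "inv_count (S \<union> T) W = inv_count S W + inv_count T W"
proof -
  have "{(s, t). s \<in> S \<union> T \<and> t \<in> W \<and> t < s} =
        {(s, t). s \<in> S \<and> t \<in> W \<and> t < s} \<union> {(s, t). s \<in> T \<and> t \<in> W \<and> t < s}" by auto
  moreover have "{(s, t). s \<in> S \<and> t \<in> W \<and> t < s} \<inter> {(s, t). s \<in> T \<and> t \<in> W \<and> t < s} = {}"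
    using assms by auto
  ultimately show ?thesis unfolding inv_count_def
    by (simp add: card_Un_disjoint inv_pairs_finite assms)
qed

lemma inv_union_right:
  assumes "finite S" "finite T" "finite W" "T \<inter> W = {}"
  shows "inv_count S (T \<union> W) = inv_count S T + inv_count S W"
proof -
  have "{(s, t). s \<in> S \<and> t \<in> T \<union> W \<and> t < s} =
        {(s, t). s \<in> S \<and> t \<in> T \<and> t < s} \<union> {(s, t). s \<in> S \<and> t \<in> W \<and> t < s}" by auto
  moreover have "{(s, t). s \<in> S \<and> t \<in> T \<and> t < s} \<inter> {(s, t). s \<in> S \<and> t \<in> W \<and> t < s} = {}"
    using assms by auto
  ultimately show ?thesis unfolding inv_count_def
    by (simp add: card_Un_disjoint inv_pairs_finite assms)
qed

lemma inv_empty[simp]: "inv_count {} T = 0" "inv_count S {} = 0"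
  by (auto simp: inv_count_def)

lemma inv_swap:
  assumes "finite S" "finite T" "S \<inter> T = {}"
  shows "inv_count S T + inv_count T S = card S * card T"
proof -
  have e: "{(s, t). s \<in> S \<and> t \<in> T \<and> t < s} \<union> prod.swap ` {(s, t). s \<in> T \<and> t \<in> S \<and> t < s} = S \<times> T"
  proof (intro equalityI subsetI)
    fix p assume "p \<in> S \<times> T"
    then obtain s t where p: "p = (s,t)" "s \<in> S" "t \<in> T" by auto
    with assms have "s \<noteq> t" by auto
    then show "p \<in> {(s, t). s \<in> S \<and> t \<in> T \<and> t < s} \<union> prod.swap ` {(s, t). s \<in> T \<and> t \<in> S \<and> t < s}"
      using p by (cases "t < s") (auto simp: image_iff)
  qed auto
  have d: "{(s, t). s \<in> S \<and> t \<in> T \<and> t < s} \<inter> prod.swap ` {(s, t). s \<in> T \<and> t \<in> S \<and> t < s} = {}"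
    by auto
  have c: "card (prod.swap ` {(s, t). s \<in> T \<and> t \<in> S \<and> t < s}) = inv_count T S"
    unfolding inv_count_def by (rule card_image) (simp add: inj_on_def)
  have "card S * card T = card (S \<times> T)" by (simp add: card_cartesian_product)
  also have "\<dots> = inv_count S T + inv_count T S"
    unfolding e[symmetric] using d c
    by (subst card_Un_disjoint) (auto simp: inv_count_def inv_pairs_finite assms)
  finally show ?thesis by simp
qed

lemma inv_single_left: "finite T \<Longrightarrow> inv_count {m} T = card {t\<in>T. t < m}"
proof -
  assume "finite T"
  have "{(s, t). s \<in> {m} \<and> t \<in> T \<and> t < s} = (\<lambda>t. (m,t)) ` {t\<in>T. t < m}" by auto
  then show ?thesis unfolding inv_count_def by (simp add: card_image inj_on_def)
qed

lemma gmono_grass[simp]: "finite S \<Longrightarrow> (gmono S :: 'a::comm_ring_1 grass) \<in> grass"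
  by (rule grassI) (auto simp: gmono_def supp_def split: if_splits)

lemma gzero_grass[simp]: "(gzero::'a::comm_ring_1 grass) \<in> grass" by (auto simp: grass_def gzero_def)
lemma gone_gmono: "(gone::'a::comm_ring_1 grass) = gmono {}" by (simp add: gone_def gmono_def)
lemma gen_gmono: "(gen i::'a::comm_ring_1 grass) = gmono {i}" by (simp add: gen_def gmono_def)
lemma gone_grass[simp]: "(gone::'a::comm_ring_1 grass) \<in> grass" by (simp add: gone_gmono)
lemma gen_grass[simp]: "(gen i::'a::comm_ring_1 grass) \<in> grass" by (simp add: gen_gmono)

lemma supp_gadd: "supp (gadd (x::'a::comm_ring_1 grass) y) \<subseteq> supp x \<union> supp y" by (auto simp: supp_def gadd_def)
lemma supp_gsmult: "supp (gsmult c (x::'a::comm_ring_1 grass)) \<subseteq> supp x" by (auto simp: supp_def gsmult_def)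
lemma supp_gneg: "supp (gneg (x::'a::comm_ring_1 grass)) = supp x" by (auto simp: supp_def gneg_def)

lemma gadd_grass[simp]: "(x::'a::comm_ring_1 grass) \<in> grass \<Longrightarrow> y \<in> grass \<Longrightarrow> gadd x y \<in> grass"
  apply (rule grassI)
   apply (meson finite_Un finite_subset grassD(1) supp_gadd)
  by (clarsimp simp: gadd_def grass_def) (metis add_0)

lemma gsmult_grass[simp]: "(x::'a::comm_ring_1 grass) \<in> grass \<Longrightarrow> gsmult c x \<in> grass"
  apply (rule grassI)
   apply (meson finite_subset grassD(1) supp_gsmult)
  by (clarsimp simp: gsmult_def grass_def) (metis mult_zero_right)

lemma gneg_grass[simp]: "(x::'a::comm_ring_1 grass) \<in> grass \<Longrightarrow> gneg x \<in> grass"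
  apply (rule grassI)
   apply (simp add: supp_gneg grassD)
  by (auto simp: gneg_def grass_def)

lemma gneg_gsmult: "gneg x = gsmult (-1) (x :: 'a::comm_ring_1 grass)"
  by (simp add: gneg_def gsmult_def)

lemma gmul_nonzero_ex:
  assumes "gmul x y U \<noteq> 0"
  shows "\<exists>S T. x S \<noteq> 0 \<and> y T \<noteq> 0 \<and> S \<inter> T = {} \<and> S \<union> T = U"
proof -
  let ?P = "{(S, T). x S \<noteq> 0 \<and> y T \<noteq> 0 \<and> S \<inter> T = {} \<and> S \<union> T = U}"
  have "(\<Sum>(S, T)\<in>?P. (-1) ^ inv_count S T * x S * y T) \<noteq> 0" using assms by (simp add: gmul_def)
  then obtain p where "p \<in> ?P" by (meson sum.not_neutral_contains_not_neutral)
  then show ?thesis by auto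
qed

lemma supp_gmul: "supp (gmul x y) \<subseteq> (\<lambda>(S,T). S \<union> T) ` (supp x \<times> supp y)"
proof
  fix U assume "U \<in> supp (gmul x y)"
  then have "gmul x y U \<noteq> 0" by (simp add: supp_def)
  then obtain S T where "x S \<noteq> 0" "y T \<noteq> 0" "S \<union> T = U"
    using gmul_nonzero_ex by blast
  then show "U \<in> (\<lambda>(S,T). S \<union> T) ` (supp x \<times> supp y)" by (auto simp: supp_def)
qed

lemma gmul_grass[simp]: "x \<in> grass \<Longrightarrow> y \<in> grass \<Longrightarrow> gmul x y \<in> grass"
proof (rule grassI)
  assume x: "x \<in> grass" and y: "y \<in> grass"
  show "finite (supp (gmul x y))"
    by (rule finite_subset[OF supp_gmul]) (simp add: grassD x y)
  fix U assume "gmul x y U \<noteq> 0"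
  then obtain S T where "x S \<noteq> 0" "y T \<noteq> 0" "S \<union> T = U"
    using gmul_nonzero_ex by blast
  then show "finite U" using x y by (auto dest: grassD(2))
qed

lemma gsum_empty[simp]: "gsum {} F = gzero" by (simp add: gsum_def gzero_def)
lemma gsum_insert: "finite A \<Longrightarrow> a \<notin> A \<Longrightarrow> gsum (insert a A) F = gadd (F a) (gsum A F)"
  by (simp add: gsum_def gadd_def)

lemma gsum_grass[simp]: "finite A \<Longrightarrow> (\<And>i. i \<in> A \<Longrightarrow> F i \<in> grass) \<Longrightarrow> gsum A F \<in> grass"
  by (induction A rule: finite_induct) (auto simp: gsum_insert)

lemma gsum_cong: "(\<And>i. i \<in> A \<Longrightarrow> F i = G i) \<Longrightarrow> gsum A F = gsum A G"
  by (simp add: gsum_def)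

lemma gsum_cong_simp[cong]: "A = B \<Longrightarrow> (\<And>i. i \<in> B =simp=> F i = G i) \<Longrightarrow> gsum A F = gsum B G"
  unfolding gsum_def simp_implies_def by (rule ext) (simp cong: sum.cong)

lemma grass_expand: "x \<in> grass \<Longrightarrow> x = gsum (supp x) (\<lambda>S. gsmult (x S) (gmono S))"
proof
  fix U assume x: "x \<in> grass"
  have "(\<Sum>S\<in>supp x. x S * (if U = S then 1 else 0)) = (\<Sum>S\<in>supp x. if U = S then x S else 0)"
    by (rule sum.cong) auto
  also have "\<dots> = (if U \<in> supp x then x U else 0)"
    by (simp add: sum.delta'[OF grassD(1)[OF x]])
  finally show "x U = gsum (supp x) (\<lambda>S. gsmult (x S) (gmono S)) U"
    by (auto simp: gsum_def gsmult_def gmono_def supp_def)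
qed



lemma supp_fin_sets'[simp]: "x \<in> grass \<Longrightarrow> S \<in> supp x \<Longrightarrow> finite S"
  by (rule supp_fin_sets)

lemma grass_fin_supp[simp]: "x \<in> grass \<Longrightarrow> finite (supp x)"
  by (rule grassD)

lemma supp_gone: "supp (gone::'a::comm_ring_1 grass) = {{}}"
  by (auto simp: supp_def gone_def)

lemma gmul_gadd_left:
  fixes x y z :: "'a::comm_ring_1 grass"
  assumes "x \<in> grass" "y \<in> grass" "z \<in> grass"
  shows "gmul (gadd x y) z = gadd (gmul x z) (gmul y z)"
proof
  fix U
  let ?A = "supp x \<union> supp y"
  have fA: "finite ?A" "finite (supp z)" using assms by auto
  have 1: "gmul (gadd x y) z U = (\<Sum>S\<in>?A. \<Sum>T\<in>supp z. gadd x y S * z T * mm S T U)"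
    by (rule gmul_expand) (use fA supp_gadd in auto)
  have 2: "gmul x z U = (\<Sum>S\<in>?A. \<Sum>T\<in>supp z. x S * z T * mm S T U)"
    by (rule gmul_expand) (use fA in auto)
  have 3: "gmul y z U = (\<Sum>S\<in>?A. \<Sum>T\<in>supp z. y S * z T * mm S T U)"
    by (rule gmul_expand) (use fA in auto)
  show "gmul (gadd x y) z U = gadd (gmul x z) (gmul y z) U"
  proof -
    have g: "gadd (gmul x z) (gmul y z) U = gmul x z U + gmul y z U" by (simp add: gadd_def)
    show ?thesis by (simp only: 1 g 2 3) (simp add: gadd_def sum.distrib distrib_right)
  qed
qed

lemma gmul_gadd_right:
  fixes x y z :: "'a::comm_ring_1 grass"
  assumes "x \<in> grass" "y \<in> grass" "z \<in> grass"
  shows "gmul z (gadd x y) = gadd (gmul z x) (gmul z y)"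
proof
  fix U
  let ?A = "supp x \<union> supp y"
  have fA: "finite ?A" "finite (supp z)" using assms by auto
  have 1: "gmul z (gadd x y) U = (\<Sum>S\<in>supp z. \<Sum>T\<in>?A. z S * gadd x y T * mm S T U)"
    by (rule gmul_expand) (use fA supp_gadd in auto)
  have 2: "gmul z x U = (\<Sum>S\<in>supp z. \<Sum>T\<in>?A. z S * x T * mm S T U)"
    by (rule gmul_expand) (use fA in auto)
  have 3: "gmul z y U = (\<Sum>S\<in>supp z. \<Sum>T\<in>?A. z S * y T * mm S T U)"
    by (rule gmul_expand) (use fA in auto)
  show "gmul z (gadd x y) U = gadd (gmul z x) (gmul z y) U"
  proof -
    have g: "gadd (gmul z x) (gmul z y) U = gmul z x U + gmul z y U" by (simp add: gadd_def)
    show ?thesis by (simp only: 1 g 2 3) (simp add: gadd_def sum.distrib distrib_right distrib_left)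
  qed
qed

lemma gmul_gsmult_left:
  fixes x y :: "'a::comm_ring_1 grass"
  assumes "x \<in> grass" "y \<in> grass"
  shows "gmul (gsmult c x) y = gsmult c (gmul x y)"
proof
  fix U
  have fA: "finite (supp x)" "finite (supp y)" using assms by auto
  have 1: "gmul (gsmult c x) y U = (\<Sum>S\<in>supp x. \<Sum>T\<in>supp y. gsmult c x S * y T * mm S T U)"
    by (rule gmul_expand) (use fA supp_gsmult in auto)
  have 2: "gmul x y U = (\<Sum>S\<in>supp x. \<Sum>T\<in>supp y. x S * y T * mm S T U)"
    by (rule gmul_expand) (use fA in auto)
  show "gmul (gsmult c x) y U = gsmult c (gmul x y) U"
  proof -
    have g: "gsmult c (gmul x y) U = c * gmul x y U" by (simp add: gsmult_def)
    show ?thesis by (simp only: 1 g 2) (simp add: gsmult_def sum_distrib_left mult.assoc)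
  qed
qed

lemma gmul_gsmult_right:
  fixes x y :: "'a::comm_ring_1 grass"
  assumes "x \<in> grass" "y \<in> grass"
  shows "gmul x (gsmult c y) = gsmult c (gmul x y)"
proof
  fix U
  have fA: "finite (supp x)" "finite (supp y)" using assms by auto
  have 1: "gmul x (gsmult c y) U = (\<Sum>S\<in>supp x. \<Sum>T\<in>supp y. x S * gsmult c y T * mm S T U)"
    by (rule gmul_expand) (use fA supp_gsmult in auto)
  have 2: "gmul x y U = (\<Sum>S\<in>supp x. \<Sum>T\<in>supp y. x S * y T * mm S T U)"
    by (rule gmul_expand) (use fA in auto)
  show "gmul x (gsmult c y) U = gsmult c (gmul x y) U"
  proof -
    have g: "gsmult c (gmul x y) U = c * gmul x y U" by (simp add: gsmult_def)
    show ?thesis by (simp only: 1 g 2) (simp add: gsmult_def sum_distrib_left mult.assoc mult.left_commute)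
  qed
qed

lemma gmul_gzero_left[simp]: "gmul gzero x = gzero"
  by (simp add: gmul_def gzero_def)
lemma gmul_gzero_right[simp]: "gmul x gzero = gzero"
  by (simp add: gmul_def gzero_def)

lemma mm_empty_left: "mm {} T U = (if T = U then 1 else 0)"
  by (simp add: mm_def)
lemma mm_empty_right: "mm S {} U = (if S = U then 1 else 0)"
  by (simp add: mm_def)

lemma gmul_gone_left[simp]:
  fixes x :: "'a::comm_ring_1 grass"
  assumes "x \<in> grass" shows "gmul gone x = x"
proof
  fix U
  have "gmul gone x U = (\<Sum>S\<in>{{}}. \<Sum>T\<in>supp x. gone S * x T * mm S T U)"
    by (rule gmul_expand) (simp_all add: grassD(1)[OF assms] supp_gone)
  also have "\<dots> = (\<Sum>T\<in>supp x. if T = U then x T else 0)"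
    by (simp add: gone_def mm_empty_left if_distrib cong: if_cong)
  also have "\<dots> = x U" using grassD(1)[OF assms] by (simp add: sum.delta supp_def)
  finally show "gmul gone x U = x U" .
qed

lemma gmul_gone_right[simp]:
  fixes x :: "'a::comm_ring_1 grass"
  assumes "x \<in> grass" shows "gmul x gone = x"
proof
  fix U
  have "gmul x gone U = (\<Sum>S\<in>supp x. \<Sum>T\<in>{{}}. x S * gone T * mm S T U)"
    by (rule gmul_expand) (simp_all add: grassD(1)[OF assms] supp_gone)
  also have "\<dots> = (\<Sum>T\<in>supp x. if T = U then x T else 0)"
    by (simp add: gone_def mm_empty_right if_distrib cong: if_cong)
  also have "\<dots> = x U" using grassD(1)[OF assms] by (simp add: sum.delta supp_def)
  finally show "gmul x gone U = x U" .
qed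

lemma gmul_gmono_fun:
  assumes "finite S" "finite T"
  shows "gmul (gmono S :: 'a::comm_ring_1 grass) (gmono T) = (\<lambda>U. mm S T U)"
proof
  fix U
  have "gmul (gmono S :: 'a grass) (gmono T) U = (\<Sum>S'\<in>{S}. \<Sum>T'\<in>{T}. gmono S S' * gmono T T' * mm S' T' U)"
    by (rule gmul_expand) (auto simp: supp_def gmono_def)
  then show "gmul (gmono S :: 'a grass) (gmono T) U = mm S T U" by (simp add: gmono_def)
qed

lemma gmul_gmono:
  assumes "finite S" "finite T"
  shows "gmul (gmono S :: 'a::comm_ring_1 grass) (gmono T) = (if S \<inter> T = {} then gsmult ((-1) ^ inv_count S T) (gmono (S \<union> T)) else gzero)"
  unfolding gmul_gmono_fun[OF assms] by (rule ext) (simp add: mm_def gsmult_def gmono_def gzero_def)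

lemma gsmult_gzero[simp]: "gsmult c gzero = (gzero::'a::comm_ring_1 grass)" by (simp add: gsmult_def gzero_def)
lemma gsmult_gsmult[simp]: "gsmult c (gsmult d x) = gsmult (c * d) (x::'a::comm_ring_1 grass)" by (simp add: gsmult_def mult.assoc)

lemma gmul_gsum_left:
  fixes y :: "'a::comm_ring_1 grass"
  assumes "finite A" "\<And>i. i \<in> A \<Longrightarrow> F i \<in> grass" "y \<in> grass"
  shows "gmul (gsum A F) y = gsum A (\<lambda>i. gmul (F i) y)"
  using assms by (induction A rule: finite_induct) (auto simp: gsum_insert gmul_gadd_left)

lemma gmul_gsum_right:
  fixes y :: "'a::comm_ring_1 grass"
  assumes "finite A" "\<And>i. i \<in> A \<Longrightarrow> F i \<in> grass" "y \<in> grass"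
  shows "gmul y (gsum A F) = gsum A (\<lambda>i. gmul y (F i))"
  using assms by (induction A rule: finite_induct) (auto simp: gsum_insert gmul_gadd_right)

lemma gsmult_gsum: "gsmult c (gsum A F) = gsum A (\<lambda>i. gsmult c (F i))"
  by (simp add: gsmult_def gsum_def sum_distrib_left)

lemma gmono_assoc:
  assumes "finite S" "finite T" "finite W"
  shows "gmul (gmul (gmono S) (gmono T)) (gmono W) = gmul (gmono S) (gmul (gmono T) (gmono W) :: 'a::comm_ring_1 grass)"
proof (cases "S \<inter> T = {} \<and> T \<inter> W = {} \<and> S \<inter> W = {}")
  case True
  then have d: "S \<inter> T = {}" "T \<inter> W = {}" "S \<inter> W = {}" by auto
  have i1: "inv_count (S \<union> T) W = inv_count S W + inv_count T W" by (rule inv_union_left) (use assms d in auto)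
  have i2: "inv_count S (T \<union> W) = inv_count S T + inv_count S W" by (rule inv_union_right) (use assms d in auto)
  have e1: "(S \<union> T) \<inter> W = {}" "S \<inter> (T \<union> W) = {}" using d by auto
  show ?thesis using assms d e1
    by (simp add: gmul_gmono gmul_gsmult_left gmul_gsmult_right i1 i2 power_add Un_assoc mult_ac)
next
  case False
  then show ?thesis using assms
    by (auto simp: gmul_gmono gmul_gsmult_left gmul_gsmult_right)
qed

lemma grass_expand_sym: "x \<in> grass \<Longrightarrow> gsum (supp x) (\<lambda>S. gsmult (x S) (gmono S)) = x"
  using grass_expand by metis

lemma assoc_gen:
  fixes a b c :: "nat set \<Rightarrow> 'a::comm_ring_1"
  assumes "finite A" "finite B" "finite C" "\<forall>S\<in>A. finite S" "\<forall>S\<in>B. finite S" "\<forall>S\<in>C. finite S"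
  shows "gmul (gmul (gsum A (\<lambda>S. gsmult (a S) (gmono S))) (gsum B (\<lambda>S. gsmult (b S) (gmono S)))) (gsum C (\<lambda>S. gsmult (c S) (gmono S)))
       = gmul (gsum A (\<lambda>S. gsmult (a S) (gmono S))) (gmul (gsum B (\<lambda>S. gsmult (b S) (gmono S))) (gsum C (\<lambda>S. gsmult (c S) (gmono S))))"
  using assms
  by (simp add: gmul_gsum_left gmul_gsum_right gmul_gsmult_left gmul_gsmult_right gsmult_gsum gmono_assoc mult_ac cong: gsum_cong)

lemma gmul_assoc:
  fixes x y z :: "'a::comm_ring_1 grass"
  assumes "x \<in> grass" "y \<in> grass" "z \<in> grass"
  shows "gmul (gmul x y) z = gmul x (gmul y z)"
  using assoc_gen[of "supp x" "supp y" "supp z" x y z] assms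
  by (simp add: grass_expand_sym)



lemma gsum_swap: "gsum A (\<lambda>i. gsum B (\<lambda>j. F i j)) = gsum B (\<lambda>j. gsum A (\<lambda>i. F i j))"
  unfolding gsum_def by (rule ext) (rule sum.swap)

lemma bilin_gen:
  fixes a b :: "nat set \<Rightarrow> 'a::comm_ring_1"
  assumes "finite A" "finite B" "\<forall>S\<in>A. finite S" "\<forall>S\<in>B. finite S"
  shows "gmul (gsum A (\<lambda>S. gsmult (a S) (gmono S))) (gsum B (\<lambda>S. gsmult (b S) (gmono S)))
       = gsum A (\<lambda>S. gsum B (\<lambda>T. gsmult (a S * b T) (gmul (gmono S) (gmono T))))"
proof -
  have "gmul (gsum A (\<lambda>S. gsmult (a S) (gmono S))) (gsum B (\<lambda>S. gsmult (b S) (gmono S)))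
     = gsum A (\<lambda>S. gmul (gsmult (a S) (gmono S)) (gsum B (\<lambda>S. gsmult (b S) (gmono S))))"
    by (rule gmul_gsum_left) (use assms in auto)
  also have "\<dots> = gsum A (\<lambda>S. gsum B (\<lambda>T. gmul (gsmult (a S) (gmono S)) (gsmult (b T) (gmono T))))"
    by (rule gsum_cong, rule gmul_gsum_right) (use assms in auto)
  also have "\<dots> = gsum A (\<lambda>S. gsum B (\<lambda>T. gsmult (a S * b T) (gmul (gmono S) (gmono T))))"
    by (rule gsum_cong, rule gsum_cong) (use assms in \<open>simp add: gmul_gsmult_left gmul_gsmult_right mult.commute\<close>)
  finally show ?thesis .
qed

lemma gmul_expand2:
  fixes x y :: "'a::comm_ring_1 grass"
  assumes "x \<in> grass" "y \<in> grass"
  shows "gmul x y = gsum (supp x) (\<lambda>S. gsum (supp y) (\<lambda>T. gsmult (x S * y T) (gmul (gmono S) (gmono T))))"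
  using bilin_gen[of "supp x" "supp y" x y] assms by (simp add: grass_expand_sym)

lemma neg_one_pow_odd_sum:
  assumes "odd (a + b)"
  shows "((-1::'a::comm_ring_1) ^ a) = - ((-1) ^ b)"
proof -
  have "((-1::'a) ^ a) = (-1) ^ a * ((-1) ^ b * (-1) ^ b)"
    by (simp flip: power_add)
  also have "\<dots> = (-1) ^ (a + b) * (-1) ^ b" by (simp add: power_add mult.assoc)
  also have "\<dots> = - ((-1) ^ b)" using assms by simp
  finally show ?thesis .
qed

lemma gmono_supercomm:
  assumes "finite S" "finite T"
  shows "gmul (gmono S) (gmono T) = gsmult ((-1) ^ (card S * card T)) (gmul (gmono T) (gmono S) :: 'a::comm_ring_1 grass)"
proof (cases "S \<inter> T = {}")
  case True
  have i: "inv_count S T + inv_count T S = card S * card T" using inv_swap assms True by blast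
  have "((-1::'a) ^ inv_count S T) = (-1) ^ (card S * card T) * (-1) ^ inv_count T S"
  proof -
    have "((-1::'a) ^ inv_count S T) = (-1) ^ inv_count S T * ((-1) ^ inv_count T S * (-1) ^ inv_count T S)"
      by (simp flip: power_add)
    also have "\<dots> = (-1) ^ (card S * card T) * (-1) ^ inv_count T S"
      by (simp only: i[symmetric] power_add mult.assoc)
    finally show ?thesis .
  qed
  then show ?thesis using True assms by (simp add: gmul_gmono Int_commute Un_commute)
next
  case False
  then show ?thesis using assms by (simp add: gmul_gmono Int_commute)
qed

definition godd :: "'a::zero grass \<Rightarrow> bool" where
  "godd x \<longleftrightarrow> (\<forall>S. x S \<noteq> 0 \<longrightarrow> odd (card S))"

lemma odd_anticomm:
  fixes x y :: "'a::comm_ring_1 grass"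
  assumes "x \<in> grass" "y \<in> grass" "godd x" "godd y"
  shows "gmul x y = gneg (gmul y x)"
proof -
  have "gmul x y = gsum (supp x) (\<lambda>S. gsum (supp y) (\<lambda>T. gsmult (x S * y T) (gmul (gmono S) (gmono T))))"
    by (rule gmul_expand2) fact+
  also have "\<dots> = gsum (supp x) (\<lambda>S. gsum (supp y) (\<lambda>T. gsmult (- (x S * y T)) (gmul (gmono T) (gmono S))))"
  proof (rule gsum_cong, rule gsum_cong)
    fix S T assume S: "S \<in> supp x" and T: "T \<in> supp y"
    have "odd (card S)" "odd (card T)" using S T assms(3,4) by (auto simp: godd_def supp_def)
    then have "(-1::'a) ^ (card S * card T) = -1" by simp
    then show "gsmult (x S * y T) (gmul (gmono S) (gmono T)) = gsmult (- (x S * y T)) (gmul (gmono T) (gmono S))"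
      using gmono_supercomm[of S T, where 'a='a] S T assms by simp
  qed
  also have "\<dots> = gneg (gsum (supp y) (\<lambda>T. gsum (supp x) (\<lambda>S. gsmult (y T * x S) (gmul (gmono T) (gmono S)))))"
    by (subst gsum_swap) (simp add: gneg_gsmult gsmult_gsum mult_ac)
  also have "\<dots> = gneg (gmul y x)"
    by (subst gmul_expand2[of y x]) (use assms in auto)
  finally show ?thesis .
qed

lemma length_ge_gmul:
  fixes x y :: "'a::comm_ring_1 grass"
  assumes "x \<in> grass" "y \<in> grass" "length_ge a x" "length_ge b y"
  shows "length_ge (a + b) (gmul x y)"
  unfolding length_ge_def
proof (intro allI impI)
  fix U assume "gmul x y U \<noteq> 0"
  then obtain S T where st: "x S \<noteq> 0" "y T \<noteq> 0" "S \<inter> T = {}" "S \<union> T = U"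
    using gmul_nonzero_ex by blast
  have "finite S" "finite T" using st assms grassD by blast+
  then have "card U = card S + card T" using st card_Un_disjoint by blast
  then show "a + b \<le> card U" using st assms(3,4) by (auto simp: length_ge_def intro: add_mono)
qed

definition gbnd :: "nat \<Rightarrow> 'a::zero grass \<Rightarrow> bool" where
  "gbnd N x \<longleftrightarrow> (\<forall>S. x S \<noteq> 0 \<longrightarrow> S \<subseteq> {..<N})"

lemma gbnd_gmul:
  fixes x y :: "'a::comm_ring_1 grass"
  assumes "gbnd N x" "gbnd N y"
  shows "gbnd N (gmul x y)"
  unfolding gbnd_def
proof (intro allI impI)
  fix U assume "gmul x y U \<noteq> 0"
  then obtain S T where st: "x S \<noteq> 0" "y T \<noteq> 0" "S \<inter> T = {}" "S \<union> T = U"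
    using gmul_nonzero_ex by blast
  then show "U \<subseteq> {..<N}" using assms by (auto simp: gbnd_def)
qed

lemma gbnd_gadd: "gbnd N x \<Longrightarrow> gbnd N y \<Longrightarrow> gbnd N (gadd x (y::'a::comm_ring_1 grass))"
  unfolding gbnd_def gadd_def by (metis add_0)
lemma gbnd_gsmult: "gbnd N x \<Longrightarrow> gbnd N (gsmult c (x::'a::comm_ring_1 grass))"
  unfolding gbnd_def gsmult_def by (metis mult_zero_right)
lemma gbnd_gneg: "gbnd N x \<Longrightarrow> gbnd N (gneg (x::'a::comm_ring_1 grass))"
  by (auto simp: gbnd_def gneg_def)
lemma gbnd_gzero: "gbnd N (gzero::'a::comm_ring_1 grass)"
  by (auto simp: gbnd_def gzero_def)
lemma length_ge_gadd: "length_ge k x \<Longrightarrow> length_ge k y \<Longrightarrow> length_ge k (gadd x (y::'a::comm_ring_1 grass))"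
  unfolding length_ge_def gadd_def by (metis add_0)
lemma length_ge_gsmult: "length_ge k x \<Longrightarrow> length_ge k (gsmult c (x::'a::comm_ring_1 grass))"
  unfolding length_ge_def gsmult_def by (metis mult_zero_right)
lemma length_ge_gneg: "length_ge k x \<Longrightarrow> length_ge k (gneg (x::'a::comm_ring_1 grass))"
  by (auto simp: length_ge_def gneg_def)
lemma length_ge_gzero: "length_ge k (gzero::'a::comm_ring_1 grass)"
  by (auto simp: length_ge_def gzero_def)
lemma length_ge_mono: "length_ge k x \<Longrightarrow> j \<le> k \<Longrightarrow> length_ge j x"
  by (auto simp: length_ge_def)



definition anticomm :: "(nat \<Rightarrow> 'a::comm_ring_1 grass) \<Rightarrow> bool" where
  "anticomm u \<longleftrightarrow> (\<forall>i. u i \<in> grass) \<and> (\<forall>i k. gmul (u i) (u k) = gneg (gmul (u k) (u i)))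
      \<and> (\<forall>i. gmul (u i) (u i) = gzero)"

definition gP :: "(nat \<Rightarrow> 'a::comm_ring_1 grass) \<Rightarrow> nat set \<Rightarrow> 'a grass" where
  "gP u V = gprod (map u (sorted_list_of_set V))"

lemma gprod_Nil[simp]: "gprod [] = gone" by (simp add: gprod_def)
lemma gprod_Cons[simp]: "gprod (x # xs) = gmul x (gprod xs)" by (simp add: gprod_def)

lemma gprod_grass[simp]: "(\<And>x. x \<in> set xs \<Longrightarrow> x \<in> grass) \<Longrightarrow> gprod xs \<in> grass"
  by (induction xs) auto

lemma gP_empty[simp]: "gP u {} = gone" by (simp add: gP_def)

lemma gP_nonempty: "finite V \<Longrightarrow> V \<noteq> {} \<Longrightarrow> gP u V = gmul (u (Min V)) (gP u (V - {Min V}))"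
  by (simp add: gP_def sorted_list_of_set_nonempty)

lemma anticommD1: "anticomm u \<Longrightarrow> u i \<in> grass"
  unfolding anticomm_def by blast
lemma anticommD2: "anticomm u \<Longrightarrow> gmul (u i) (u k) = gneg (gmul (u k) (u i))"
  unfolding anticomm_def by blast
lemma anticommD3: "anticomm u \<Longrightarrow> gmul (u i) (u i) = gzero"
  unfolding anticomm_def by blast
lemmas anticommD = anticommD1 anticommD3

lemma gP_grass[simp]: "anticomm u \<Longrightarrow> gP u V \<in> grass"
  unfolding gP_def by (rule gprod_grass) (auto simp: anticommD)

lemma gsmult_one[simp]: "gsmult 1 x = (x::'a::comm_ring_1 grass)" by (simp add: gsmult_def)

lemma gneg_gneg[simp]: "gneg (gneg x) = (x::'a::comm_ring_1 grass)" by (simp add: gneg_def)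

lemma gneg_gzero[simp]: "gneg gzero = (gzero::'a::comm_ring_1 grass)" by (simp add: gneg_def gzero_def)

lemma gP_insert_min:
  assumes "finite V" "\<forall>v\<in>V. s < v"
  shows "gP u (insert s V) = gmul (u s) (gP u V)"
proof -
  have "Min (insert s V) = s" by (rule Min_eqI) (use assms in auto)
  moreover have "insert s V - {s} = V" using assms by auto
  ultimately show ?thesis using gP_nonempty[of "insert s V" u] assms by simp
qed

lemma gP_insert:
  fixes u :: "nat \<Rightarrow> 'a::comm_ring_1 grass"
  assumes u: "anticomm u" and V: "finite V"
  shows "gmul (u s) (gP u V) = (if s \<in> V then gzero else gsmult ((-1) ^ card {v\<in>V. v < s}) (gP u (insert s V)))"
  using V
proof (induction "card V" arbitrary: V)
  case 0
  then have "V = {}" by simp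
  then show ?case using u by (simp add: gP_insert_min anticommD)
next
  case (Suc n)
  then have ne: "V \<noteq> {}" by auto
  define m where "m = Min V"
  define V' where "V' = V - {m}"
  have mV: "m \<in> V" using ne Suc.prems m_def by simp
  have fV': "finite V'" using Suc.prems V'_def by simp
  have cV': "card V' = n" using Suc.hyps mV V'_def Suc.prems by simp
  have V'gt: "\<forall>v\<in>V'. m < v" using Suc.prems V'_def m_def by (auto simp: order.strict_iff_order)
  have PV: "gP u V = gmul (u m) (gP u V')" using gP_nonempty[OF Suc.prems ne] m_def V'_def by simp
  have VV: "V = insert m V'" using mV V'_def by auto
  have gr: "u m \<in> grass" "u s \<in> grass" "gP u V' \<in> grass" using u by (auto simp: anticommD)
  consider "s < m" | "s = m" | "m < s" by arith
  then show ?case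
  proof cases
    case 1
    have mle: "\<forall>v\<in>V. m \<le> v" using Min_le[OF Suc.prems] m_def by blast
    then have sV: "s \<notin> V" and sl: "\<forall>v\<in>V. s < v" using 1 by fastforce+
    have c0: "card {v\<in>V. v < s} = 0" using sl by auto
    have "gmul (u s) (gP u V) = gsmult ((-1) ^ card {v\<in>V. v < s}) (gP u (insert s V))"
      unfolding c0 power_0 gsmult_one gP_insert_min[OF Suc.prems sl] ..
    then show ?thesis using sV by simp
  next
    case 2
    have "gmul (u s) (gP u V) = gmul (gmul (u m) (u m)) (gP u V')"
      using 2 PV gr by (simp add: gmul_assoc)
    then show ?thesis using mV 2 u by (simp add: anticommD)
  next
    case 3
    have "gmul (u s) (gP u V) = gmul (gmul (u s) (u m)) (gP u V')"
      using PV gr by (simp add: gmul_assoc)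
    also have "\<dots> = gneg (gmul (u m) (gmul (u s) (gP u V')))"
      using gr u by (simp add: anticommD2[of u s m] gneg_gsmult gmul_gsmult_left gmul_assoc)
    also have "\<dots> = (if s \<in> V then gzero else gsmult ((-1) ^ card {v\<in>V. v < s}) (gP u (insert s V)))"
    proof (cases "s \<in> V'")
      case True
      then show ?thesis using Suc.hyps(1)[OF cV'[symmetric] fV'] VV by simp
    next
      case False
      have sV: "s \<notin> V" using False 3 VV by auto
      have c: "{v\<in>V. v < s} = insert m {v\<in>V'. v < s}" using VV 3 by auto
      have c2: "card {v\<in>V. v < s} = Suc (card {v\<in>V'. v < s})"
        unfolding c using fV' V'_def by (subst card_insert_disjoint) auto
      have ins: "gP u (insert s V) = gmul (u m) (gP u (insert s V'))"
        using gP_insert_min[of "insert s V'" m u] fV' V'gt 3 VV by (simp add: insert_commute)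
      show ?thesis using Suc.hyps(1)[OF cV'[symmetric] fV'] False sV u
        by (simp add: ins c2 gneg_gsmult gmul_gsmult_right anticommD)
    qed
    finally show ?thesis .
  qed
qed

lemma gP_mul:
  fixes u :: "nat \<Rightarrow> 'a::comm_ring_1 grass"
  assumes u: "anticomm u" and S: "finite S" and T: "finite T"
  shows "gmul (gP u S) (gP u T) = (if S \<inter> T = {} then gsmult ((-1) ^ inv_count S T) (gP u (S \<union> T)) else gzero)"
  using S
proof (induction "card S" arbitrary: S)
  case 0
  then have "S = {}" by simp
  then show ?case using u by simp
next
  case (Suc n)
  then have ne: "S \<noteq> {}" by auto
  define m where "m = Min S"
  define S' where "S' = S - {m}"
  have mS: "m \<in> S" using ne Suc.prems m_def by simp
  have fS': "finite S'" using Suc.prems S'_def by simp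
  have cS': "card S' = n" using Suc.hyps mS S'_def Suc.prems by simp
  have S'gt: "\<forall>v\<in>S'. m < v" using Suc.prems S'_def m_def by (auto simp: order.strict_iff_order)
  have PS: "gP u S = gmul (u m) (gP u S')" using gP_nonempty[OF Suc.prems ne] m_def S'_def by simp
  have SS: "S = insert m S'" "m \<notin> S'" using mS S'_def by auto
  have gr: "u m \<in> grass" "gP u S' \<in> grass" "gP u T \<in> grass" using u by (auto simp: anticommD)
  have "gmul (gP u S) (gP u T) = gmul (u m) (gmul (gP u S') (gP u T))"
    using PS gr by (simp add: gmul_assoc)
  also have "\<dots> = (if S \<inter> T = {} then gsmult ((-1) ^ inv_count S T) (gP u (S \<union> T)) else gzero)"
  proof (cases "S' \<inter> T = {}")
    case False
    then show ?thesis using Suc.hyps(1)[OF cS'[symmetric] fS'] SS by auto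
  next
    case True
    note IH = Suc.hyps(1)[OF cS'[symmetric] fS', unfolded if_P[OF True]]
    have fU: "finite (S' \<union> T)" using fS' T by simp
    show ?thesis
    proof (cases "m \<in> T")
      case True
      then have "S \<inter> T \<noteq> {}" using mS by auto
      then show ?thesis using IH gP_insert[OF u fU, of m] True gr u by (simp add: gmul_gsmult_right)
    next
      case False
      have d: "S \<inter> T = {}" using SS \<open>S' \<inter> T = {}\<close> False by auto
      have c: "{v \<in> S' \<union> T. v < m} = {t\<in>T. t < m}" using S'gt by auto
      have i: "inv_count S T = card {t\<in>T. t < m} + inv_count S' T"
        using inv_union_left[of "{m}" S' T] SS fS' T inv_single_left[OF T, of m] by simp
      have e: "insert m (S' \<union> T) = S \<union> T" using SS by auto
      have "gmul (u m) (gsmult ((-1) ^ inv_count S' T) (gP u (S' \<union> T)))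
          = gsmult ((-1) ^ inv_count S' T) (gmul (u m) (gP u (S' \<union> T)))"
        using gr u by (simp add: gmul_gsmult_right anticommD)
      also have "\<dots> = gsmult ((-1) ^ inv_count S' T) (gsmult ((-1) ^ card {t\<in>T. t < m}) (gP u (S \<union> T)))"
        using gP_insert[OF u fU, of m] False SS(2) by (simp only: c e) simp
      also have "\<dots> = gsmult ((-1) ^ inv_count S T) (gP u (S \<union> T))"
        by (simp only: gsmult_gsmult i power_add mult.commute)
      finally show ?thesis using IH d by simp
    qed
  qed
  finally show ?case .
qed



lemma gext_gsum: "gext u x = gsum (supp x) (\<lambda>S. gsmult (x S) (gP u S))"
  by (simp add: gext_def gsum_def gsmult_def gP_def supp_def)

lemma gext_sup:
  assumes "finite A" "supp x \<subseteq> A"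
  shows "gext u x = gsum A (\<lambda>S. gsmult (x S) (gP u S))"
  unfolding gext_gsum gsum_def
proof
  fix U
  show "(\<Sum>i\<in>supp x. gsmult (x i) (gP u i) U) = (\<Sum>i\<in>A. gsmult (x i) (gP u i) U)"
    by (rule sum.mono_neutral_left) (use assms in \<open>auto simp: supp_def gsmult_def\<close>)
qed

definition is_hom :: "('a::comm_ring_1 grass \<Rightarrow> 'a grass) \<Rightarrow> bool" where
  "is_hom h \<longleftrightarrow> (\<forall>x\<in>grass. h x \<in> grass)
     \<and> (\<forall>x\<in>grass. \<forall>y\<in>grass. h (gadd x y) = gadd (h x) (h y))
     \<and> (\<forall>c. \<forall>x\<in>grass. h (gsmult c x) = gsmult c (h x))
     \<and> (\<forall>x\<in>grass. \<forall>y\<in>grass. h (gmul x y) = gmul (h x) (h y))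
     \<and> h gone = gone"

lemma is_homD:
  assumes "is_hom h"
  shows "x \<in> grass \<Longrightarrow> h x \<in> grass"
    "x \<in> grass \<Longrightarrow> y \<in> grass \<Longrightarrow> h (gadd x y) = gadd (h x) (h y)"
    "x \<in> grass \<Longrightarrow> h (gsmult c x) = gsmult c (h x)"
    "x \<in> grass \<Longrightarrow> y \<in> grass \<Longrightarrow> h (gmul x y) = gmul (h x) (h y)"
    "h gone = gone"
  using assms by (auto simp: is_hom_def)

lemma is_hom_gzero:
  assumes "is_hom h" shows "h gzero = gzero"
proof -
  have "h (gsmult 0 gzero) = gsmult 0 (h gzero)" using is_homD(3)[OF assms, of gzero 0] by simp
  then show ?thesis by (simp add: gsmult_def gzero_def)
qed

lemma is_hom_gneg:
  assumes "is_hom h" "x \<in> grass" shows "h (gneg x) = gneg (h x)"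
  using is_homD(3)[OF assms(1,2), of "-1"] by (simp add: gneg_gsmult)

lemma is_hom_gsum:
  assumes "is_hom h" "finite A" "\<And>i. i \<in> A \<Longrightarrow> F i \<in> grass"
  shows "h (gsum A F) = gsum A (\<lambda>i. h (F i))"
  using assms(2,3)
proof (induction A rule: finite_induct)
  case empty then show ?case using is_hom_gzero[OF assms(1)] by simp
next
  case (insert a A) then show ?case using is_homD[OF assms(1)] by (simp add: gsum_insert)
qed

lemma is_hom_gprod:
  assumes "is_hom h" "\<And>x. x \<in> set xs \<Longrightarrow> x \<in> grass"
  shows "h (gprod xs) = gprod (map h xs)"
  using assms(2) by (induction xs) (auto simp: is_homD[OF assms(1)])

lemma is_hom_gprod_gen:
  assumes "is_hom h" shows "h (gprod (map gen l)) = gprod (map (h \<circ> gen) l)"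
  by (subst is_hom_gprod[OF assms]) auto

lemma is_hom_comp:
  assumes "is_hom h" "is_hom g" shows "is_hom (h \<circ> g)"
  using is_homD[OF assms(1)] is_homD[OF assms(2)] unfolding is_hom_def by auto

lemma anticomm_hom:
  assumes u: "anticomm u" and h: "is_hom h" shows "anticomm (h \<circ> u)"
  unfolding anticomm_def comp_def
proof (intro conjI allI)
  fix i k
  show "h (u i) \<in> grass" using u by (simp add: anticommD is_homD(1)[OF h])
  have "gmul (h (u i)) (h (u k)) = h (gmul (u i) (u k))" by (rule is_homD(4)[OF h anticommD1[OF u] anticommD1[OF u], symmetric])
  also have "\<dots> = h (gneg (gmul (u k) (u i)))" using anticommD2[OF u] by metis
  also have "\<dots> = gneg (gmul (h (u k)) (h (u i)))" using u by (simp add: anticommD is_homD(4)[OF h] is_hom_gneg[OF h])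
  finally show "gmul (h (u i)) (h (u k)) = gneg (gmul (h (u k)) (h (u i)))" .
  have "gmul (h (u i)) (h (u i)) = h (gmul (u i) (u i))" by (rule is_homD(4)[OF h anticommD1[OF u] anticommD1[OF u], symmetric])
  also have "\<dots> = gzero" using u by (simp add: anticommD is_hom_gzero[OF h])
  finally show "gmul (h (u i)) (h (u i)) = gzero" .
qed

lemma gP_gen: "finite S \<Longrightarrow> gP gen S = (gmono S :: 'a::comm_ring_1 grass)"
proof (induction "card S" arbitrary: S)
  case 0 then show ?case by (simp add: gone_gmono)
next
  case (Suc n)
  then have ne: "S \<noteq> {}" by auto
  define m where "m = Min S"
  have mS: "m \<in> S" using ne Suc.prems m_def by simp
  have gt: "\<forall>v\<in>S - {m}. m < v" using Suc.prems m_def by (auto simp: order.strict_iff_order)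
  have i: "inv_count {m} (S - {m}) = 0"
  proof -
    have "{t \<in> S - {m}. t < m} = {}" using gt less_asym by blast
    then show ?thesis using inv_single_left[of "S - {m}" m] Suc.prems by simp
  qed
  have "(gP gen S :: 'a grass) = gmul (gen m) (gP gen (S - {m}))" using gP_nonempty[OF Suc.prems ne] m_def by simp
  also have "\<dots> = gmul (gmono {m}) (gmono (S - {m}))"
  proof -
    have c: "card (S - {m}) = n" using Suc.hyps(2) mS Suc.prems by simp
    have "gP gen (S-{m}) = (gmono (S - {m}) :: 'a grass)" using Suc.hyps(1)[OF c[symmetric]] Suc.prems by simp
    then show ?thesis by (simp add: gen_gmono)
  qed
  also have "\<dots> = gmono S" using Suc.prems mS i by (simp add: gmul_gmono insert_absorb)
  finally show ?case .
qed

lemma hom_determined: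
  fixes h :: "'a::comm_ring_1 grass \<Rightarrow> 'a grass"
  assumes h: "is_hom h" and x: "x \<in> grass"
  shows "h x = gext (h \<circ> gen) x"
proof -
  have "h x = h (gsum (supp x) (\<lambda>S. gsmult (x S) (gP gen S)))"
    using grass_expand[OF x] x by (metis (no_types, lifting) gP_gen gsum_cong supp_fin_sets)
  also have "\<dots> = gsum (supp x) (\<lambda>S. gsmult (x S) (h (gP gen S)))"
    using x by (simp add: is_hom_gsum[OF h] is_homD(3)[OF h] gP_gen)
  also have "\<dots> = gsum (supp x) (\<lambda>S. gsmult (x S) (gP (h \<circ> gen) S))"
    unfolding gP_def by (rule gsum_cong) (simp add: is_hom_gprod_gen[OF h])
  also have "\<dots> = gext (h \<circ> gen) x" by (simp add: gext_gsum)
  finally show ?thesis .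
qed

lemma sum_swap3:
  "(\<Sum>U\<in>C. \<Sum>S\<in>A. \<Sum>T\<in>B. f S T U) = (\<Sum>S\<in>A. \<Sum>T\<in>B. \<Sum>U\<in>C. (f S T U :: 'a::comm_monoid_add))"
proof -
  have "(\<Sum>U\<in>C. \<Sum>S\<in>A. \<Sum>T\<in>B. f S T U) = (\<Sum>S\<in>A. \<Sum>U\<in>C. \<Sum>T\<in>B. f S T U)"
    by (rule sum.swap)
  also have "\<dots> = (\<Sum>S\<in>A. \<Sum>T\<in>B. \<Sum>U\<in>C. f S T U)"
    by (rule sum.cong[OF refl]) (rule sum.swap)
  finally show ?thesis .
qed

lemma mm_sum:
  assumes "finite C" "S \<union> T \<in> C"
  shows "(\<Sum>U\<in>C. mm S T U * g U) = (if S \<inter> T = {} then (-1) ^ inv_count S T * g (S \<union> T) else (0::'a::comm_ring_1))"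
proof -
  have "(\<Sum>U\<in>C. mm S T U * g U) = (\<Sum>U\<in>C. if S \<union> T = U then (if S \<inter> T = {} then (-1) ^ inv_count S T * g U else 0) else 0)"
    by (rule sum.cong) (auto simp: mm_def)
  also have "\<dots> = (if S \<inter> T = {} then (-1) ^ inv_count S T * g (S \<union> T) else 0)"
    using assms by (simp add: sum.delta)
  finally show ?thesis .
qed

lemma bilin_fam:
  fixes a b :: "'b \<Rightarrow> 'a::comm_ring_1"
  assumes "finite A" "finite B" "\<And>S. P S \<in> grass" "\<And>S. Q S \<in> grass"
  shows "gmul (gsum A (\<lambda>S. gsmult (a S) (P S))) (gsum B (\<lambda>S. gsmult (b S) (Q S)))
       = gsum A (\<lambda>S. gsum B (\<lambda>T. gsmult (a S * b T) (gmul (P S) (Q T))))"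
proof -
  have "gmul (gsum A (\<lambda>S. gsmult (a S) (P S))) (gsum B (\<lambda>S. gsmult (b S) (Q S)))
     = gsum A (\<lambda>S. gmul (gsmult (a S) (P S)) (gsum B (\<lambda>S. gsmult (b S) (Q S))))"
    by (rule gmul_gsum_left) (use assms in auto)
  also have "\<dots> = gsum A (\<lambda>S. gsum B (\<lambda>T. gmul (gsmult (a S) (P S)) (gsmult (b T) (Q T))))"
    by (rule gsum_cong, rule gmul_gsum_right) (use assms in auto)
  also have "\<dots> = gsum A (\<lambda>S. gsum B (\<lambda>T. gsmult (a S * b T) (gmul (P S) (Q T))))"
    by (rule gsum_cong, rule gsum_cong) (use assms in \<open>simp add: gmul_gsmult_left gmul_gsmult_right mult.commute\<close>)
  finally show ?thesis .
qed

lemma gext_hom: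
  fixes u :: "nat \<Rightarrow> 'a::comm_ring_1 grass"
  assumes u: "anticomm u"
  shows "is_hom (gext u)"
  unfolding is_hom_def
proof (intro conjI ballI allI)
  fix x :: "'a grass" assume x: "x \<in> grass"
  show "gext u x \<in> grass" using x u by (simp add: gext_gsum)
next
  fix x y :: "'a grass" assume x: "x \<in> grass" and y: "y \<in> grass"
  let ?A = "supp x \<union> supp y"
  have fA: "finite ?A" using x y by simp
  have 1: "gext u (gadd x y) = gsum ?A (\<lambda>S. gsmult (gadd x y S) (gP u S))"
    by (rule gext_sup[OF fA]) (use supp_gadd in auto)
  have 2: "gext u x = gsum ?A (\<lambda>S. gsmult (x S) (gP u S))" by (rule gext_sup[OF fA]) auto
  have 3: "gext u y = gsum ?A (\<lambda>S. gsmult (y S) (gP u S))" by (rule gext_sup[OF fA]) auto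
  show "gext u (gadd x y) = gadd (gext u x) (gext u y)"
    unfolding 1 2 3 by (rule ext) (simp add: gsum_def gadd_def gsmult_def sum.distrib distrib_right)
next
  fix c and x :: "'a grass" assume x: "x \<in> grass"
  have fA: "finite (supp x)" using x by simp
  have 1: "gext u (gsmult c x) = gsum (supp x) (\<lambda>S. gsmult (gsmult c x S) (gP u S))"
    by (rule gext_sup[OF fA]) (use supp_gsmult in auto)
  show "gext u (gsmult c x) = gsmult c (gext u x)"
    unfolding 1 by (rule ext) (simp add: gext_gsum gsum_def gsmult_def sum_distrib_left mult.assoc)
next
  fix x y :: "'a grass" assume x: "x \<in> grass" and y: "y \<in> grass"
  let ?C = "(\<lambda>(S,T). S \<union> T) ` (supp x \<times> supp y)"
  have fC: "finite ?C" using x y by simp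
  have gP: "\<And>S. gP u S \<in> grass" using u by simp
  show "gext u (gmul x y) = gmul (gext u x) (gext u y)"
  proof
    fix U'
    have "gext u (gmul x y) U' = (\<Sum>U\<in>?C. gmul x y U * gP u U U')"
      using gext_sup[OF fC supp_gmul[of x y], of u] by (simp add: gsum_def gsmult_def)
    also have "\<dots> = (\<Sum>U\<in>?C. \<Sum>S\<in>supp x. \<Sum>T\<in>supp y. x S * y T * (mm S T U * gP u U U'))"
      by (simp add: gmul_expand[OF _ _ order.refl order.refl] x y sum_distrib_right mult.assoc)
    also have "\<dots> = (\<Sum>S\<in>supp x. \<Sum>T\<in>supp y. x S * y T * (\<Sum>U\<in>?C. mm S T U * gP u U U'))"
      by (simp only: sum_distrib_left) (rule sum_swap3)
    also have "\<dots> = (\<Sum>S\<in>supp x. \<Sum>T\<in>supp y. x S * y T * gmul (gP u S) (gP u T) U')"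
    proof (rule sum.cong[OF refl], rule sum.cong[OF refl])
      fix S T assume "S \<in> supp x" "T \<in> supp y"
      then have "S \<union> T \<in> ?C" by auto
      then show "x S * y T * (\<Sum>U\<in>?C. mm S T U * gP u U U') = x S * y T * gmul (gP u S) (gP u T) U'"
        using mm_sum[OF fC, of S T "\<lambda>U. gP u U U'"] gP_mul[OF u, of S T] \<open>S \<in> supp x\<close> \<open>T \<in> supp y\<close> x y
        by (simp add: gsmult_def gzero_def)
    qed
    also have "\<dots> = gmul (gext u x) (gext u y) U'"
      unfolding gext_gsum bilin_fam[OF grass_fin_supp[OF x] grass_fin_supp[OF y] gP gP]
      by (simp add: gsum_def gsmult_def)
    finally show "gext u (gmul x y) U' = gmul (gext u x) (gext u y) U'" .
  qed
next
  show "gext u gone = gone"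
  proof -
    have "gext u gone = gsum {{}} (\<lambda>S. gsmult (gone S) (gP u S))"
      by (rule gext_sup) (auto simp: supp_def gone_def)
    then show ?thesis by (simp add: gsum_def gone_def gsmult_def)
  qed
qed



lemma godd_gen: "godd (gen i :: 'a::comm_ring_1 grass)"
  by (simp add: godd_def gen_def)

lemma godd_gneg: "godd x \<Longrightarrow> godd (gneg (x :: 'a::comm_ring_1 grass))"
  by (simp add: godd_def gneg_def)
lemma godd_gadd: "godd x \<Longrightarrow> godd y \<Longrightarrow> godd (gadd x (y :: 'a::comm_ring_1 grass))"
  unfolding godd_def gadd_def by (metis add_0)
lemma godd_gsmult: "godd x \<Longrightarrow> godd (gsmult c (x :: 'a::comm_ring_1 grass))"
  unfolding godd_def gsmult_def by (metis mult_zero_right)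

lemma supp_gen: "supp (gen k :: 'a::comm_ring_1 grass) = {{k}}"
  by (auto simp: supp_def gen_def)

lemma self_neg_zero:
  fixes x :: "'a::field_char_0 grass"
  assumes "x = gneg x" shows "x = gzero"
proof
  fix U
  have "x U = - x U" using assms by (metis gneg_def)
  then show "x U = gzero U" by (simp add: gzero_def)
qed

lemma anticomm_odd:
  fixes u :: "nat \<Rightarrow> 'a::field_char_0 grass"
  assumes "\<And>i. u i \<in> grass" "\<And>i. godd (u i)"
  shows "anticomm u"
  unfolding anticomm_def using assms odd_anticomm self_neg_zero by blast

lemma gmul_gen_right_at:
  fixes x :: "'a::comm_ring_1 grass"
  assumes x: "x \<in> grass" and k: "k \<notin> S" "\<forall>T\<in>supp x. k \<notin> T"
  shows "gmul x (gen k) (insert k S) = x S * (-1) ^ inv_count S {k}"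
proof -
  have "gmul x (gen k) (insert k S) = (\<Sum>T\<in>supp x. \<Sum>T'\<in>{{k}}. x T * gen k T' * mm T T' (insert k S))"
    by (rule gmul_expand) (simp_all add: grassD(1)[OF x] supp_gen)
  also have "\<dots> = (\<Sum>T\<in>supp x. if S = T then x T * (-1) ^ inv_count S {k} else 0)"
  proof (rule sum.cong[OF refl])
    fix T assume T: "T \<in> supp x"
    then have "k \<notin> T" using k by auto
    have eq: "(T \<union> {k} = insert k S) = (T = S)"
    proof
      assume h: "T \<union> {k} = insert k S"
      have "T = (T \<union> {k}) - {k}" using \<open>k \<notin> T\<close> by auto
      also have "\<dots> = insert k S - {k}" by (simp only: h)
      also have "\<dots> = S" using k(1) by auto
      finally show "T = S" .
    qed auto
    have e1: "(T \<inter> {k} = {}) = True" using \<open>k \<notin> T\<close> by blast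
    have "mm T {k} (insert k S) = (if S = T then (-1) ^ inv_count S {k} else (0::'a))"
      unfolding mm_def eq e1 by (cases "T = S") simp_all
    then show "(\<Sum>T'\<in>{{k}}. x T * gen k T' * mm T T' (insert k S)) = (if S = T then x T * (-1) ^ inv_count S {k} else 0)"
      by (simp add: gen_def)
  qed
  also have "\<dots> = x S * (-1) ^ inv_count S {k}"
    using grassD(1)[OF x] by (simp add: sum.delta sum.delta' supp_def)
  finally show ?thesis .
qed

lemma gmul_gen_left_at:
  fixes x :: "'a::comm_ring_1 grass"
  assumes x: "x \<in> grass" and k: "k \<notin> S" "\<forall>T\<in>supp x. k \<notin> T"
  shows "gmul (gen k) x (insert k S) = (-1) ^ inv_count {k} S * x S"
proof -
  have "gmul (gen k) x (insert k S) = (\<Sum>T'\<in>{{k}}. \<Sum>T\<in>supp x. gen k T' * x T * mm T' T (insert k S))"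
    by (rule gmul_expand) (simp_all add: grassD(1)[OF x] supp_gen)
  also have "\<dots> = (\<Sum>T\<in>supp x. if S = T then (-1) ^ inv_count {k} S * x T else 0)"
  proof -
    have "\<And>T. T \<in> supp x \<Longrightarrow> gen k {k} * x T * mm {k} T (insert k S) = (if S = T then (-1) ^ inv_count {k} S * x T else 0)"
    proof -
      fix T assume T: "T \<in> supp x"
      then have "k \<notin> T" using k by auto
      have eq: "({k} \<union> T = insert k S) = (T = S)"
    proof
      assume h: "{k} \<union> T = insert k S"
      have "T = ({k} \<union> T) - {k}" using \<open>k \<notin> T\<close> by auto
      also have "\<dots> = insert k S - {k}" by (simp only: h)
      also have "\<dots> = S" using k(1) by auto
      finally show "T = S" .
    qed auto
      have e1: "({k} \<inter> T = {}) = True" using \<open>k \<notin> T\<close> by blast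
      have "mm {k} T (insert k S) = (if S = T then (-1) ^ inv_count {k} S else (0::'a))"
        unfolding mm_def eq e1 by (cases "T = S") simp_all
      then show "gen k {k} * x T * mm {k} T (insert k S) = (if S = T then (-1) ^ inv_count {k} S * x T else 0)"
        by (simp add: gen_def)
    qed
    then show ?thesis by simp
  qed
  also have "\<dots> = (-1) ^ inv_count {k} S * x S"
    using grassD(1)[OF x] by (simp add: sum.delta sum.delta' supp_def)
  finally show ?thesis .
qed



locale S2loc =
  fixes \<phi> :: "'a::field_char_0 grass \<Rightarrow> 'a grass"
  assumes aut: "grass_aut \<phi>"
    and invol: "\<forall>x\<in>grass. \<phi> (\<phi> x) = x"
    and S2: "type_S2 \<phi>"
    and aj3: "\<forall>j\<in>Jset \<phi>. length_ge 3 (aj \<phi> j)"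
begin

lemma phi_grass: "x \<in> grass \<Longrightarrow> \<phi> x \<in> grass"
  using aut unfolding grass_aut_def bij_betw_def by auto

lemma hom: "is_hom \<phi>"
  using aut phi_grass unfolding grass_aut_def is_hom_def by auto

lemma phi_gen_odd: "godd (\<phi> (gen j))"
proof (rule ccontr)
  let ?g = "\<phi> (gen j)"
  have g: "?g \<in> grass" by (simp add: phi_grass)
  assume "\<not> godd ?g"
  then obtain S where S: "?g S \<noteq> 0" "even (card S)" by (auto simp: godd_def)
  have fS: "finite S" using S g grassD by blast
  let ?X = "\<Union>(supp ?g) \<union> {j}"
  have fX: "finite ?X" using g by auto
  have "infinite (Iplus \<phi>)" using S2 by (simp add: type_S2_def)
  then have "infinite (Iplus \<phi> - ?X)" using fX by (simp add: Diff_infinite_finite)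
  then obtain k where k: "k \<in> Iplus \<phi>" "k \<notin> ?X" by (metis Diff_iff finite.emptyI infinite_imp_nonempty ex_in_conv)
  have phik: "\<phi> (gen k) = gen k" using k by (simp add: Iplus_def)
  have kS: "k \<notin> S" using k S by (auto simp: supp_def)
  have kT: "\<forall>T\<in>supp ?g. k \<notin> T" using k by auto
  have "gmul (gen j) (gen k) = gneg (gmul (gen k) (gen j) :: 'a grass)"
    by (rule odd_anticomm) (auto simp: godd_gen)
  then have "\<phi> (gmul (gen j) (gen k)) = \<phi> (gneg (gmul (gen k) (gen j)))" by simp
  then have eq: "gmul ?g (gen k) = gneg (gmul (gen k) ?g)"
    by (simp add: is_homD(4)[OF hom] is_hom_gneg[OF hom] phik)
  have "gmul ?g (gen k) (insert k S) = gneg (gmul (gen k) ?g) (insert k S)" using eq by simp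
  then have e2: "?g S * (-1) ^ inv_count S {k} = - ((-1) ^ inv_count {k} S * ?g S)"
    by (simp add: gmul_gen_right_at[OF g kS kT] gmul_gen_left_at[OF g kS kT] gneg_def)
  have sw: "inv_count S {k} + inv_count {k} S = card S" using inv_swap[OF fS, of "{k}"] kS by simp
  have pw: "((-1::'a) ^ inv_count S {k}) = (-1) ^ inv_count {k} S"
  proof -
    have "((-1::'a) ^ inv_count S {k}) = (-1) ^ inv_count S {k} * ((-1) ^ inv_count {k} S * (-1) ^ inv_count {k} S)"
      by (simp flip: power_add)
    also have "\<dots> = (-1) ^ card S * (-1) ^ inv_count {k} S"
      by (simp only: sw[symmetric] power_add mult.assoc)
    also have "\<dots> = (-1) ^ inv_count {k} S" using S by simp
    finally show ?thesis .
  qed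
  let ?c = "((-1::'a) ^ inv_count {k} S)"
  have "?c \<noteq> 0" by simp
  from e2 pw have "2 * ?c * ?g S = 0" by (simp add: algebra_simps)
  then show False using S \<open>?c \<noteq> 0\<close> by simp
qed

lemma Iplus_phi: "i \<in> Iplus \<phi> \<Longrightarrow> \<phi> (gen i) = gen i"
  by (simp add: Iplus_def)

lemma cases_i:
  obtains "i \<in> Iplus \<phi>" | "i \<notin> Iplus \<phi>" "\<phi> (gen i) = gneg (gen i)" | "i \<in> Jset \<phi>" "i \<notin> Iplus \<phi>"
proof -
  consider (a) "\<phi> (gen i) = gen i" | (b) "\<phi> (gen i) \<noteq> gen i" "\<phi> (gen i) = gneg (gen i)"
    | (c) "\<phi> (gen i) \<noteq> gen i" "\<phi> (gen i) \<noteq> gneg (gen i)" by blast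
  then show thesis
  proof cases
    case a then show thesis using that(1) by (simp add: Iplus_def Iset_def)
  next
    case b then show thesis using that(2) by (simp add: Iplus_def Iset_def)
  next
    case c then show thesis using that(3) by (simp add: Iplus_def Iset_def Jset_def)
  qed
qed

lemma aj_card1:
  assumes "i \<in> Jset \<phi>" "card S = 1"
  shows "\<phi> (gen i) S = - gen i S"
proof -
  have "\<not> 3 \<le> card S" using assms(2) by simp
  then have "aj \<phi> i S = 0" using aj3 assms(1) unfolding length_ge_def by blast
  then have "gen i S + \<phi> (gen i) S = 0" by (simp add: aj_def gsmult_def gadd_def)
  then show ?thesis by (simp only: add_eq_0_iff)
qed

lemma lin_part_eq: "lin_part \<phi> i = (if i \<in> Iplus \<phi> then gen i else gneg (gen i))"
proof (cases i rule: cases_i)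
  case 1
  then show ?thesis unfolding lin_part_def Iplus_phi[OF 1] by (intro ext) (auto simp: gen_def)
next
  case 2
  then show ?thesis by (intro ext) (auto simp: lin_part_def gen_def gneg_def)
next
  case 3
  show ?thesis
  proof
    fix S
    show "lin_part \<phi> i S = (if i \<in> Iplus \<phi> then gen i else gneg (gen i)) S"
      using 3 aj_card1[OF 3(1), of S] by (auto simp: lin_part_def gen_def gneg_def)
  qed
qed

definition ff :: "nat \<Rightarrow> 'a grass" where
  "ff i = (if i \<in> Iplus \<phi> then gen i else gsmult (1/2) (gadd (gen i) (gneg (\<phi> (gen i)))))"

lemma ff_grass: "ff i \<in> grass"
  by (simp add: ff_def phi_grass)

lemma ff_odd: "godd (ff i)"
  by (simp add: ff_def godd_gen godd_gsmult godd_gadd godd_gneg phi_gen_odd)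

lemma anticomm_ff: "anticomm ff"
  by (rule anticomm_odd) (auto simp: ff_grass ff_odd)

lemma anticomm_lin: "anticomm (lin_part \<phi>)"
  by (rule anticomm_odd) (auto simp: lin_part_eq godd_gen godd_gneg)

definition psi where "psi = gext ff"

lemma psi_hom: "is_hom psi"
  unfolding psi_def by (rule gext_hom[OF anticomm_ff])

lemma lin_hom: "is_hom (linearization \<phi>)"
  unfolding linearization_def by (rule gext_hom[OF anticomm_lin])

lemma gext_gen: "anticomm u \<Longrightarrow> gext u (gen i) = u i"
proof -
  assume u: "anticomm u"
  have "gext u (gen i) = gsum {{i}} (\<lambda>S. gsmult (gen i S) (gP u S))"
    by (rule gext_sup) (auto simp: supp_def gen_def)
  also have "\<dots> = gP u {i}" by (simp add: gsum_def gsmult_def gen_def)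
  also have "\<dots> = u i" using gP_nonempty[of "{i}" u] u by (simp add: anticommD)
  finally show ?thesis .
qed

lemma phi_ff: "\<phi> (ff i) = (if i \<in> Iplus \<phi> then ff i else gneg (ff i))"
proof (cases "i \<in> Iplus \<phi>")
  case True then show ?thesis by (simp add: ff_def Iplus_phi)
next
  case False
  have pp: "\<phi> (\<phi> (gen i)) = gen i" using invol by simp
  have "\<phi> (ff i) = gsmult (1/2) (gadd (\<phi> (gen i)) (gneg (gen i)))"
    using False by (simp add: ff_def is_homD[OF hom] is_hom_gneg[OF hom] phi_grass pp)
  also have "\<dots> = gneg (ff i)" using False by (rule_tac ext) (simp add: ff_def gsmult_def gadd_def gneg_def algebra_simps)
  finally show ?thesis using False by simp
qed

lemma intertwine: "x \<in> grass \<Longrightarrow> \<phi> (psi x) = psi (linearization \<phi> x)"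
proof -
  assume x: "x \<in> grass"
  have h1: "is_hom (\<phi> \<circ> psi)" by (rule is_hom_comp[OF hom psi_hom])
  have h2: "is_hom (psi \<circ> linearization \<phi>)" by (rule is_hom_comp[OF psi_hom lin_hom])
  have eq: "(\<phi> \<circ> psi) \<circ> gen = (psi \<circ> linearization \<phi>) \<circ> gen"
  proof
    fix i
    show "((\<phi> \<circ> psi) \<circ> gen) i = ((psi \<circ> linearization \<phi>) \<circ> gen) i"
      using gext_gen[OF anticomm_ff, of i] gext_gen[OF anticomm_lin, of i]
      by (simp add: psi_def linearization_def phi_ff lin_part_eq is_hom_gneg[OF psi_hom[unfolded psi_def]])
  qed
  show ?thesis using hom_determined[OF h1 x] hom_determined[OF h2 x] eq by simp
qed

end



lemma peval_gsum: "peval s f = gsum {w. f w \<noteq> 0} (\<lambda>w. gsmult (f w) (gprod (map s w)))"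
  by (simp add: peval_def gsum_def gsmult_def)

lemma peval_grass:
  fixes s :: "nat + nat \<Rightarrow> 'a::comm_ring_1 grass"
  assumes "\<And>v. s v \<in> grass" "f \<in> fpolys"
  shows "peval s f \<in> grass"
  unfolding peval_gsum
proof (rule gsum_grass)
  show "finite {w. f w \<noteq> 0}" using assms(2) by (simp add: fpolys_def)
  fix w assume "w \<in> {w. f w \<noteq> 0}"
  show "gsmult (f w) (gprod (map s w)) \<in> grass"
    by (rule gsmult_grass, rule gprod_grass) (auto simp: assms(1))
qed

lemma peval_hom:
  fixes s :: "nat + nat \<Rightarrow> 'a::comm_ring_1 grass"
  assumes h: "is_hom h" and s: "\<And>v. s v \<in> grass" and f: "f \<in> fpolys"
  shows "h (peval s f) = peval (h \<circ> s) f"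
proof -
  have fin: "finite {w. f w \<noteq> 0}" using f by (simp add: fpolys_def)
  have "h (peval s f) = gsum {w. f w \<noteq> 0} (\<lambda>w. h (gsmult (f w) (gprod (map s w))))"
    unfolding peval_gsum
  proof (rule is_hom_gsum[OF h fin])
    fix w
    show "gsmult (f w) (gprod (map s w)) \<in> grass"
      by (rule gsmult_grass, rule gprod_grass) (auto simp: s)
  qed
  also have "\<dots> = gsum {w. f w \<noteq> 0} (\<lambda>w. gsmult (f w) (gprod (map (h \<circ> s) w)))"
  proof (rule gsum_cong)
    fix w
    have "h (gprod (map s w)) = gprod (map h (map s w))"
      by (rule is_hom_gprod[OF h]) (auto simp: s)
    then show "h (gsmult (f w) (gprod (map s w))) = gsmult (f w) (gprod (map (h \<circ> s) w))"
    proof -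
      have g: "gprod (map s w) \<in> grass" by (rule gprod_grass) (auto simp: s)
      show ?thesis using is_homD(3)[OF h g, of "f w"] \<open>h (gprod (map s w)) = gprod (map h (map s w))\<close> by simp
    qed
  qed
  also have "\<dots> = peval (h \<circ> s) f" by (simp add: peval_gsum)
  finally show ?thesis .
qed

lemma gmul_sub_right:
  fixes a b c :: "'a::comm_ring_1 grass"
  assumes "a \<in> grass" "b \<in> grass" "c \<in> grass"
  shows "gmul a (gadd b (gneg c)) = gadd (gmul a b) (gneg (gmul a c))"
  using assms by (simp add: gmul_gadd_right gneg_gsmult gmul_gsmult_right)

lemma gmul_sub_left:
  fixes a b c :: "'a::comm_ring_1 grass"
  assumes "a \<in> grass" "b \<in> grass" "c \<in> grass"
  shows "gmul (gadd b (gneg c)) a = gadd (gmul b a) (gneg (gmul c a))"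
  using assms by (simp add: gmul_gadd_left gneg_gsmult gmul_gsmult_left)

lemma gbnd_mono: "gbnd N x \<Longrightarrow> N \<le> M \<Longrightarrow> gbnd M x"
  unfolding gbnd_def by (meson lessThan_subset_iff order_trans)

lemma gbnd_gen: "i < N \<Longrightarrow> gbnd N (gen i :: 'a::comm_ring_1 grass)"
  by (auto simp: gbnd_def gen_def)

lemma godd_len1: "godd x \<Longrightarrow> length_ge 1 x"
  by (auto simp: godd_def length_ge_def Suc_le_eq intro!: gr0I)

lemma gen_len1: "length_ge 1 (gen i :: 'a::comm_ring_1 grass)"
  by (rule godd_len1[OF godd_gen])

lemma grass_Union_fin: "x \<in> grass \<Longrightarrow> finite (\<Union>(supp x))"
  by (auto dest: supp_fin_sets)

context S2loc
begin

definition dd :: "nat \<Rightarrow> 'a grass" where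
  "dd i = gadd (ff i) (gneg (gen i))"

lemma dd_grass: "dd i \<in> grass" by (simp add: dd_def ff_grass)

lemma ff_eq: "ff i = gadd (gen i) (dd i)"
  by (rule ext) (simp add: dd_def gadd_def gneg_def)

lemma Jset_notIplus: "i \<in> Jset \<phi> \<Longrightarrow> i \<notin> Iplus \<phi>"
  by (simp add: Jset_def Iplus_def)

lemma dd_zero: "i \<notin> Jset \<phi> \<Longrightarrow> dd i = gzero"
proof (cases i rule: cases_i)
  case 1 then show ?thesis by (intro ext) (simp add: dd_def ff_def gadd_def gneg_def gzero_def)
next
  case 2 then show ?thesis by (intro ext) (simp add: dd_def ff_def gadd_def gneg_def gzero_def gsmult_def)
next
  case 3 then show "i \<notin> Jset \<phi> \<Longrightarrow> ?thesis" by simp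
qed

lemma dd_J: "i \<in> Jset \<phi> \<Longrightarrow> dd i = gneg (aj \<phi> i)"
  using Jset_notIplus[of i]
  by (intro ext) (simp add: dd_def ff_def gadd_def gneg_def aj_def gsmult_def algebra_simps)

lemma dd_len: "length_ge 2 (dd i)"
proof (cases "i \<in> Jset \<phi>")
  case True
  then show ?thesis using aj3 by (simp add: dd_J length_ge_gneg length_ge_mono[of 3 _ 2])
next
  case False
  then show ?thesis by (simp add: dd_zero length_ge_gzero)
qed

lemma ff_len: "length_ge 1 (ff i)"
  by (rule godd_len1[OF ff_odd])

lemma aj_grass: "aj \<phi> i \<in> grass"
  by (simp add: aj_def phi_grass)

lemma N0_ex: "\<exists>N0. (\<forall>i\<in>Jset \<phi>. i < N0) \<and> (\<forall>i. gbnd N0 (dd i))"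
proof -
  let ?X = "Jset \<phi> \<union> (\<Union>j\<in>Jset \<phi>. \<Union>(supp (aj \<phi> j)))"
  have fJ: "finite (Jset \<phi>)" using S2 by (simp add: type_S2_def)
  have "finite ?X" using fJ aj_grass by (auto simp: grass_Union_fin)
  then obtain N0 where "\<forall>n\<in>?X. n < N0" using finite_nat_set_iff_bounded by blast
  then have N0: "?X \<subseteq> {..<N0}" by auto
  have "gbnd N0 (dd i)" for i
  proof (cases "i \<in> Jset \<phi>")
    case True
    then show ?thesis using N0 by (auto simp: dd_J gbnd_def gneg_def supp_def)
  next
    case False
    then show ?thesis by (simp add: dd_zero gbnd_gzero)
  qed
  then show ?thesis using N0 by blast
qed

definition N0 where "N0 = (SOME N. (\<forall>i\<in>Jset \<phi>. i < N) \<and> (\<forall>i. gbnd N (dd i)))"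

lemma N0: "\<forall>i. gbnd N0 (dd i)"
  using someI_ex[OF N0_ex] unfolding N0_def by blast

definition Pf where "Pf l = gprod (map ff l)"
definition Pg where "Pg l = gprod (map gen l)"
definition rr where "rr l = gadd (Pf l) (gneg (Pg l))"

lemma Pf_grass: "Pf l \<in> grass" by (auto simp: Pf_def ff_grass intro!: gprod_grass)
lemma Pg_grass: "Pg l \<in> grass" by (auto simp: Pg_def intro!: gprod_grass)
lemma rr_grass: "rr l \<in> grass" by (simp add: rr_def Pf_grass Pg_grass)

lemma rr_Cons: "rr (s # l) = gadd (gmul (gen s) (rr l)) (gmul (dd s) (Pf l))"
proof -
  have 1: "gmul (gen s) (rr l) = gadd (gmul (gen s) (Pf l)) (gneg (gmul (gen s) (Pg l)))"
    unfolding rr_def by (rule gmul_sub_right) (simp_all add: Pf_grass Pg_grass)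
  have 2: "gmul (dd s) (Pf l) = gadd (gmul (ff s) (Pf l)) (gneg (gmul (gen s) (Pf l)))"
    unfolding dd_def by (rule gmul_sub_left) (simp_all add: Pf_grass ff_grass)
  show ?thesis unfolding 1 2
    by (rule ext) (simp add: rr_def Pf_def Pg_def gadd_def gneg_def)
qed

lemma Pf_len: "length_ge (length l) (Pf l)"
proof (induction l)
  case Nil then show ?case by (simp add: Pf_def length_ge_def)
next
  case (Cons s l)
  have "length_ge (1 + length l) (gmul (ff s) (Pf l))"
    by (rule length_ge_gmul[OF ff_grass Pf_grass ff_len Cons.IH])
  then show ?case by (simp add: Pf_def)
qed

lemma rr_len: "length_ge (Suc (length l)) (rr l)"
proof (induction l)
  case Nil then show ?case by (simp add: rr_def Pf_def Pg_def length_ge_def gadd_def gneg_def gone_def)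
next
  case (Cons s l)
  have a: "length_ge (1 + Suc (length l)) (gmul (gen s) (rr l))"
    by (rule length_ge_gmul[OF gen_grass rr_grass gen_len1 Cons.IH])
  have b: "length_ge (2 + length l) (gmul (dd s) (Pf l))"
    by (rule length_ge_gmul) (simp_all add: dd_grass Pf_grass dd_len Pf_len)
  show ?case unfolding rr_Cons
    by (rule length_ge_gadd) (use a b in \<open>simp_all add: length_ge_mono\<close>)
qed

lemma rr_bnd: "set l \<subseteq> {..<N} \<Longrightarrow> N0 \<le> N \<Longrightarrow> gbnd N (Pf l) \<and> gbnd N (rr l)"
proof (induction l)
  case Nil then show ?case
    by (auto simp: rr_def Pf_def Pg_def gbnd_def gadd_def gneg_def gone_def)
next
  case (Cons s l)
  then have IH: "gbnd N (Pf l)" "gbnd N (rr l)" and sN: "s < N" by auto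
  have ff: "gbnd N (ff s)" unfolding ff_eq
    by (rule gbnd_gadd) (use gbnd_gen[OF sN] gbnd_mono[OF N0[rule_format] Cons.prems(2)] in auto)
  have "gbnd N (Pf (s # l))" unfolding Pf_def using gbnd_gmul[OF ff IH(1)[unfolded Pf_def]] by simp
  moreover have "gbnd N (rr (s # l))" unfolding rr_Cons
    by (rule gbnd_gadd; rule gbnd_gmul) (use IH gbnd_gen[OF sN] gbnd_mono[OF N0[rule_format] Cons.prems(2)] in auto)
  ultimately show ?case ..
qed

lemma psi_gmono: "finite S \<Longrightarrow> psi (gmono S) = gadd (gmono S) (rr (sorted_list_of_set S))"
proof -
  assume S: "finite S"
  have "psi (gmono S) = gsum {S} (\<lambda>T. gsmult (gmono S T) (gP ff T))"
    unfolding psi_def by (rule gext_sup) (auto simp: supp_def gmono_def)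
  also have "\<dots> = gP ff S" by (rule ext) (simp add: gsum_def gsmult_def gmono_def)
  also have "\<dots> = gadd (gP gen S) (rr (sorted_list_of_set S))"
    by (rule ext) (simp add: gP_def rr_def Pf_def Pg_def gadd_def gneg_def)
  finally show ?thesis using gP_gen[OF S, where 'a='a] by simp
qed

end



context S2loc
begin

lemma gP_ff_eq: "finite T \<Longrightarrow> gP ff T = gadd (gmono T) (rr (sorted_list_of_set T))"
  using gP_gen[of T, where 'a='a]
  by (intro ext) (simp add: gP_def rr_def Pf_def Pg_def gadd_def gneg_def)

lemma rr_zero: "finite T \<Longrightarrow> card S \<le> card T \<Longrightarrow> rr (sorted_list_of_set T) S = 0"
  using rr_len[of "sorted_list_of_set T"] by (force simp: length_ge_def)

lemma psi_zero:
  assumes z: "z \<in> grass" and pz: "psi z = gzero"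
  shows "z = gzero"
proof (rule ccontr)
  assume "z \<noteq> gzero"
  then obtain S0 where S0: "z S0 \<noteq> 0" by (auto simp: gzero_def)
  define n where "n = (LEAST n. \<exists>S. z S \<noteq> 0 \<and> card S = n)"
  obtain S where S: "z S \<noteq> 0" "card S = n"
    using LeastI_ex[of "\<lambda>n. \<exists>S. z S \<noteq> 0 \<and> card S = n"] S0 n_def by blast
  have minimal: "card S \<le> card T" if "z T \<noteq> 0" for T
  proof -
    have "n \<le> card T" unfolding n_def by (rule Least_le) (use that in blast)
    then show ?thesis using S(2) by simp
  qed
  have "psi z S = (\<Sum>T\<in>supp z. z T * gP ff T S)"
    by (simp add: psi_def gext_gsum gsum_def gsmult_def)
  also have "\<dots> = (\<Sum>T\<in>supp z. if S = T then z T else 0)"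
  proof (rule sum.cong[OF refl])
    fix T assume T: "T \<in> supp z"
    then have fT: "finite T" using z by simp
    have "rr (sorted_list_of_set T) S = 0" using rr_zero[OF fT minimal] T by (simp add: supp_def)
    then show "z T * gP ff T S = (if S = T then z T else 0)"
      by (simp add: gP_ff_eq[OF fT] gadd_def gmono_def)
  qed
  also have "\<dots> = z S" using z S by (simp add: sum.delta' supp_def grassD(1)[OF z, unfolded supp_def])
  finally have "psi z S = z S" .
  then show False using pz S by (simp add: gzero_def)
qed

lemma psi_inj:
  assumes x: "x \<in> grass" and y: "y \<in> grass" and e: "psi x = psi y"
  shows "x = y"
proof -
  have "psi (gadd x (gneg y)) = gadd (psi x) (gneg (psi y))"
    unfolding is_homD(2)[OF psi_hom x gneg_grass[OF y]] is_hom_gneg[OF psi_hom y] ..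
  also have "\<dots> = gzero" using e by (intro ext) (simp add: gadd_def gneg_def gzero_def)
  finally have "gadd x (gneg y) = gzero" using psi_zero x y by simp
  then show ?thesis by (intro ext) (metis (no_types) add_eq_0_iff gadd_def gneg_def gzero_def minus_minus)
qed

lemma psi_grass: "x \<in> grass \<Longrightarrow> psi x \<in> grass"
  by (rule is_homD(1)[OF psi_hom])

lemma img_gsum:
  assumes "finite A" "\<And>T. T \<in> A \<Longrightarrow> Y T \<in> grass"
  shows "psi (gsum A (\<lambda>T. gsmult (c T) (Y T))) = gsum A (\<lambda>T. gsmult (c T) (psi (Y T)))"
  using assms by (simp add: is_hom_gsum[OF psi_hom] is_homD(3)[OF psi_hom])

lemma mono_img: "N0 \<le> N \<Longrightarrow> S \<subseteq> {..<N} \<Longrightarrow> \<exists>y\<in>grass. psi y = gmono S"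
proof (induction "N - card S" arbitrary: S rule: less_induct)
  case less
  have fS: "finite S" using less.prems(2) finite_subset by blast
  let ?r = "rr (sorted_list_of_set S)"
  have bnd: "gbnd N ?r" using rr_bnd[of "sorted_list_of_set S" N] less.prems fS by simp
  have len: "length_ge (Suc (card S)) ?r" using rr_len[of "sorted_list_of_set S"] fS by simp
  have rg: "?r \<in> grass" by (rule rr_grass)
  have "\<forall>T\<in>supp ?r. \<exists>y. y \<in> grass \<and> psi y = gmono T"
  proof
    fix T assume T: "T \<in> supp ?r"
    have TN: "T \<subseteq> {..<N}" using bnd T by (auto simp: gbnd_def supp_def)
    have cT: "Suc (card S) \<le> card T" using len T by (auto simp: length_ge_def supp_def)
    have "card T \<le> N" using card_mono[OF _ TN] by simp
    then have "N - card T < N - card S" using cT by linarith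
    then show "\<exists>y. y \<in> grass \<and> psi y = gmono T" using less.hyps[OF _ less.prems(1) TN] by blast
  qed
  then obtain Y where Y: "\<forall>T\<in>supp ?r. Y T \<in> grass \<and> psi (Y T) = gmono T" by metis
  let ?y' = "gsum (supp ?r) (\<lambda>T. gsmult (?r T) (Y T))"
  have y'g: "?y' \<in> grass" using Y rg by simp
  have "psi ?y' = gsum (supp ?r) (\<lambda>T. gsmult (?r T) (psi (Y T)))"
    by (rule img_gsum) (use Y rg in auto)
  also have "\<dots> = gsum (supp ?r) (\<lambda>T. gsmult (?r T) (gmono T))"
    by (rule gsum_cong) (use Y in auto)
  also have "\<dots> = ?r" by (rule grass_expand_sym[OF rg])
  finally have py': "psi ?y' = ?r" .
  let ?y = "gadd (gmono S) (gneg ?y')"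
  have "psi ?y = gadd (psi (gmono S)) (gneg (psi ?y'))"
    unfolding is_homD(2)[OF psi_hom gmono_grass[OF fS] gneg_grass[OF y'g]] is_hom_gneg[OF psi_hom y'g] ..
  also have "\<dots> = gmono S" unfolding py' psi_gmono[OF fS]
    by (intro ext) (simp add: gadd_def gneg_def)
  finally have "psi ?y = gmono S" .
  moreover have "?y \<in> grass" by (intro gadd_grass gneg_grass gmono_grass fS y'g)
  ultimately show ?case by blast
qed

lemma psi_surj: "x \<in> grass \<Longrightarrow> \<exists>y\<in>grass. psi y = x"
proof -
  assume x: "x \<in> grass"
  obtain N1 where N1: "\<forall>n\<in>\<Union>(supp x). n < N1"
    using grass_Union_fin[OF x] finite_nat_set_iff_bounded by blast
  let ?N = "max N0 N1"
  have "\<forall>S\<in>supp x. \<exists>y. y \<in> grass \<and> psi y = gmono S"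
  proof
    fix S assume "S \<in> supp x"
    then have "S \<subseteq> {..<?N}" using N1 by fastforce
    then show "\<exists>y. y \<in> grass \<and> psi y = gmono S" using mono_img[of ?N S] by auto
  qed
  then obtain Y where Y: "\<forall>S\<in>supp x. Y S \<in> grass \<and> psi (Y S) = gmono S" by metis
  let ?y = "gsum (supp x) (\<lambda>S. gsmult (x S) (Y S))"
  have "psi ?y = gsum (supp x) (\<lambda>S. gsmult (x S) (psi (Y S)))"
    by (rule img_gsum) (use Y x in auto)
  also have "\<dots> = gsum (supp x) (\<lambda>S. gsmult (x S) (gmono S))"
    by (rule gsum_cong) (use Y in auto)
  also have "\<dots> = x" by (rule grass_expand_sym[OF x])
  finally have "psi ?y = x" .
  moreover have "?y \<in> grass" by (rule gsum_grass) (use Y x in auto)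
  ultimately show ?thesis by blast
qed

lemma lin_grass: "x \<in> grass \<Longrightarrow> linearization \<phi> x \<in> grass"
  by (rule is_homD(1)[OF lin_hom])

lemma T2_eq: "T2 (Ezero \<phi>) (Eone \<phi>) = T2 (Ezero (linearization \<phi>)) (Eone (linearization \<phi>))"
proof (intro set_eqI iffI)
  fix f assume f: "f \<in> T2 (Ezero \<phi>) (Eone \<phi>)"
  then have fp: "f \<in> fpolys" by (simp add: T2_def)
  show "f \<in> T2 (Ezero (linearization \<phi>)) (Eone (linearization \<phi>))"
    unfolding T2_def
  proof (intro CollectI conjI allI impI fp)
    fix s :: "nat + nat \<Rightarrow> 'a grass" assume s: "(\<forall>i. s (Inl i) \<in> Ezero (linearization \<phi>)) \<and> (\<forall>i. s (Inr i) \<in> Eone (linearization \<phi>))"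
    have sg: "s v \<in> grass" for v using s by (cases v) (auto simp: Ezero_def Eone_def)
    have "(\<forall>i. (psi \<circ> s) (Inl i) \<in> Ezero \<phi>) \<and> (\<forall>i. (psi \<circ> s) (Inr i) \<in> Eone \<phi>)"
      using s sg by (auto simp: Ezero_def Eone_def psi_grass intertwine is_hom_gneg[OF psi_hom])
    then have "peval (psi \<circ> s) f = gzero" using f by (simp add: T2_def)
    then have "psi (peval s f) = psi gzero"
      by (simp add: peval_hom[OF psi_hom sg fp] is_hom_gzero[OF psi_hom])
    then show "peval s f = gzero" by (rule psi_inj[OF peval_grass[OF sg fp] gzero_grass])
  qed
next
  fix f assume f: "f \<in> T2 (Ezero (linearization \<phi>)) (Eone (linearization \<phi>))"
  then have fp: "f \<in> fpolys" by (simp add: T2_def)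
  show "f \<in> T2 (Ezero \<phi>) (Eone \<phi>)"
    unfolding T2_def
  proof (intro CollectI conjI allI impI fp)
    fix s :: "nat + nat \<Rightarrow> 'a grass" assume s: "(\<forall>i. s (Inl i) \<in> Ezero \<phi>) \<and> (\<forall>i. s (Inr i) \<in> Eone \<phi>)"
    have sg: "s v \<in> grass" for v using s by (cases v) (auto simp: Ezero_def Eone_def)
    have "\<forall>v. \<exists>y. y \<in> grass \<and> psi y = s v" using psi_surj sg by blast
    then obtain t where t: "\<And>v. t v \<in> grass" "\<And>v. psi (t v) = s v" by metis
    have st: "s = psi \<circ> t" using t by auto
    have t0: "t (Inl i) \<in> Ezero (linearization \<phi>)" for i
    proof -
      have "psi (linearization \<phi> (t (Inl i))) = psi (t (Inl i))"
        using intertwine[OF t(1)] t(2) s by (simp add: Ezero_def)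
      then show ?thesis using psi_inj[OF lin_grass[OF t(1)] t(1)] t(1) by (simp add: Ezero_def)
    qed
    have t1: "t (Inr i) \<in> Eone (linearization \<phi>)" for i
    proof -
      have "psi (linearization \<phi> (t (Inr i))) = psi (gneg (t (Inr i)))"
        using intertwine[OF t(1)] t(2) s by (simp add: Eone_def is_hom_gneg[OF psi_hom t(1)])
      then show ?thesis using psi_inj[OF lin_grass[OF t(1)] gneg_grass[OF t(1)]] t(1) by (simp add: Eone_def)
    qed
    have "peval t f = gzero" using f t0 t1 by (simp add: T2_def)
    moreover have "psi (peval t f) = peval (psi \<circ> t) f" by (rule peval_hom[OF psi_hom _ fp]) (rule t(1))
    ultimately show "peval s f = gzero"
      using st by (simp add: is_hom_gzero[OF psi_hom])
  qed
qed

end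

theorem mainTheorem3:
  fixes \<phi> :: "'a::field_char_0 grass \<Rightarrow> 'a grass"
  assumes "grass_aut \<phi>"
    and "\<forall>x\<in>grass. \<phi> (\<phi> x) = x"
    and "type_S2 \<phi>"
    and "\<forall>j\<in>Jset \<phi>. length_ge 3 (aj \<phi> j)"
  shows "T2 (Ezero \<phi>) (Eone \<phi>)
           = T2 (Ezero (linearization \<phi>)) (Eone (linearization \<phi>))"
  by (rule S2loc.T2_eq[OF S2loc.intro[OF assms]])


end
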